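(* Under the standing setting and assumptions (A0)–(A3) below, for every $n\in\mathbb N$, \[ \mathbb E[d^2(x_n,x^* )]\leq \mathbb E[d^2(x_0,x^* )]+\int\|\phi^*\|^2_{x^*}\,d\mu\cdot\sum_{k=0}^\infty\lambda_k^2<\infty. \]
   Context: Geometry. A Hadamard space is a complete CAT(0) space: a geodesic metric space $(X,d)$ with $d^2(\gamma(tl),x)\leq (1-t)d^2(\gamma(0),x)+td^2(\gamma(l),x)-t(1-t)d^2(\gamma(0),\gamma(l))$ for all $x\in X$, geodesics $\gamma:[0,l]\to X$, $t\in[0,1]$; it is uniquely geodesic, $\gamma_{x,y}$ denoting the geodesic from $x$ to $y$. For $x\in X$, $\angle_x(\gamma,\eta):=\lim_{s,t\to0^+}\bar\angle_x(\gamma(s),\eta(t))$ is the Aleksandrov angle between nonconstant geodesics issuing from $x$; $\Sigma_xX$ is the completion of such geodesics modulo $\angle_x=0$; the tangent space $T_xX$ is the Euclidean cone over $\Sigma_xX$ (elements $t\gamma$, $t\ge0$, all $0\gamma$ identified to $0_x$, $\lambda(t\gamma):=(\lambda t)\gamma$), with metric $d_x(t\gamma,s\eta)=\sqrt{t^2+s^2-2ts\cos\angle_x(\gamma,\eta)}$, $\|t\gamma\|_x=t$, $g_x(t\gamma,s\eta)=ts\cos\angle_x(\gamma,\eta)$; $TX=\bigcup_xT_xX$. $\log_x:X\to T_xX$, $\log_xa:=d(x,a)\gamma_{x,a}$ ($a\ne x$), $\log_xx:=0_x$. Vector fields. $A:X\to2^{TX}$ with $A(x)\subseteq T_xX$ is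 monotone if $g_x(u,\log_xy)\le-g_y(v,\log_yx)$ for all $u\in A(x),v\in A(y)$, and strongly monotone with modulus $\alpha>0$ if $g_x(u,\log_xy)\le-g_y(v,\log_yx)-\alpha d^2(x,y)$. For monotone $A$ and $\lambda>0$, the resolvent $J_\lambda x$ is the unique $z$ with $\tfrac1\lambda\log_zx\in A(z)$ (if it exists); $A$ satisfies the surjectivity condition if such $z$ exists for all $\lambda>0,x\in X$. The Yosida approximate is $A_\lambda x:=\tfrac1\lambda\log_{J_\lambda x}x\in T_{J_\lambda x}X$. Integration. For a probability space and a separable Hadamard space $Y$, $L^p$ consists of measurable $Y$-valued maps with finite $p$-th moment of distance; the integral/expectation of an $L^1$ map is the barycenter of its distribution (minimizer of $z\mapsto\int(d^2(z,w)-d^2(w,y))$), and conditional expectation $\mathbb E[x\mid\mathcal G]$ of $x\in L^2$ is the $\mathcal G$-measurable $L^2$ map minimizing $\int d^2(z,x)$ (extended continuously to $L^1$); this applies to $Y=X$ and $Y=T_xX$. Standing setting. $(E,\mathcal E,\mu)$ and $(\Omega,\mathcal F,\mathbb P)$ are probability spaces; $X$ is a separable Hadamard space with every $T_xX$ separable. $A:E\times X\to2^{TX}$, $A(s,x)\subseteq T_xX$, is a random monotone vector field: each $A(s,\cdot)$ is monotone and $s\mapsto J_\lambda(s,x)$ is $\mathcal E/\mathcal B(X)$-measurable for every $x,\lambda$, where $J_\lambda(s,\cdot)$, $A_\lambda(s,\cdot)$ denote resolvent and Yosida approximate of $A(s,\cdot)$; moreover each $A(s,\cdot)$ satisfies the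 surjectivity condition. For $x\in X$, $S^p_A(x)$ is the set of measurable $\phi:E\to T_xX$ with $\phi(s)\in A(s,x)$ for all $s$ and $\phi\in L^p(E,T_xX,\mu)$; the mean field is $\underline A(x):=\{\int\phi\,d\mu\mid\phi\in S^1_A(x)\}$; $\mathcal Z_A(2):=\{x\mid\exists\phi\in S^2_A(x),\ \int\phi\,d\mu=0_x\}$. Given $x_0\in X$, $(\lambda_n)\subseteq(0,\infty)$ and random variables $\xi_n:\Omega\to E$, the iteration is $x_{n+1}:=J_{\lambda_n}(\xi_{n+1},x_n)$; $\mathcal F_n:=\sigma(\xi_1,\dots,\xi_n)$ ($\mathcal F_0$ trivial), $\mathbb E_n[\cdot]:=\mathbb E[\cdot\mid\mathcal F_n]$. Note $\|A_{\lambda_n}(\xi_{n+1},x_n)\|_{x_{n+1}}=d(x_n,x_{n+1})/\lambda_n$. Assumptions. (A0) $\sum_n\lambda_n^2<\infty$, $\sum_n\lambda_n=\infty$, and $(\xi_{n+1})$ is i.i.d. with distribution $\mu$. (A1) each $A(s,\cdot)$ is strongly monotone with modulus $\alpha(s)\in(0,1]$, where $\alpha:E\to(0,1]$ is measurable with $\underline\alpha:=\int\alpha\,d\mu>0$. (A2) $\underline A$ has a zero $x^*$ (i.e. $0_{x^*}\in\underline A(x^* )$) with $x^*\in\mathcal Z_A(2)$; a fixed $\phi^*\in S^2_A(x^* )$ with $\int\phi^*\,d\mu=0_{x^*}$ is chosen. (A3) $\mathbb E_n[g_{x^*}(\phi^*(\xi_{n+1}),\log_{x^*}x_n)]=0$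 a.s. for every $n\in\mathbb N$. *)

theory Defs
  imports "HOL-Probability.Probability"
begin

definition geodesic_path :: "(real \<Rightarrow> 'a::metric_space) \<Rightarrow> real \<Rightarrow> bool" where
  "geodesic_path \<gamma> l \<longleftrightarrow> l \<ge> 0 \<and>
     (\<forall>s\<in>{0..l}. \<forall>t\<in>{0..l}. dist (\<gamma> s) (\<gamma> t) = \<bar>s - t\<bar>)"

definition hadamard_space :: "'a::complete_space itself \<Rightarrow> bool" where
  "hadamard_space _ \<longleftrightarrow>
     (\<forall>x y::'a. \<exists>\<gamma>. geodesic_path \<gamma> (dist x y) \<and> \<gamma> 0 = x \<and> \<gamma> (dist x y) = y) \<and>
     (\<forall>(\<gamma>::real \<Rightarrow> 'a) l x t. geodesic_path \<gamma> l \<longrightarrow> t \<in> {0..1} \<longrightarrow>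
        (dist (\<gamma> (t * l)) x)\<^sup>2 \<le> (1 - t) * (dist (\<gamma> 0) x)\<^sup>2 + t * (dist (\<gamma> l) x)\<^sup>2
                                  - t * (1 - t) * (dist (\<gamma> 0) (\<gamma> l))\<^sup>2)"

definition separable_space :: "'a::metric_space itself \<Rightarrow> bool" where
  "separable_space _ \<longleftrightarrow> (\<exists>D::'a set. countable D \<and> closure D = UNIV)"

definition geod :: "'a::metric_space \<Rightarrow> 'a \<Rightarrow> real \<Rightarrow> 'a" where
  "geod x y = (SOME \<gamma>. geodesic_path \<gamma> (dist x y) \<and> \<gamma> 0 = x \<and> \<gamma> (dist x y) = y)"

definition cangle :: "'a::metric_space \<Rightarrow> 'a \<Rightarrow> 'a \<Rightarrow> real" where
  "cangle x p q = arccos (((dist x p)\<^sup>2 + (dist x q)\<^sup>2 - (dist p q)\<^sup>2) / (2 * dist x p * dist x q))"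

text \<open>Aleksandrov angle at x between the geodesics from x to y and from x to z (y, z \<noteq> x).
  Every nonconstant geodesic issuing from x is an initial piece of some such geod x y.\<close>
definition alex_angle :: "'a::metric_space \<Rightarrow> 'a \<Rightarrow> 'a \<Rightarrow> real" where
  "alex_angle x y z = Lim (at_right 0 \<times>\<^sub>F at_right 0)
                          (\<lambda>(s,t). cangle x (geod x y s) (geod x z t))"

text \<open>Points of the completion of the space of directions at x are represented by
  angle-Cauchy sequences of points different from x (each point y standing for the
  direction of the geodesic from x to y).\<close>
definition dir_seq :: "'a::metric_space \<Rightarrow> (nat \<Rightarrow> 'a) \<Rightarrow> bool" where
  "dir_seq x \<sigma> \<longleftrightarrow> (\<forall>k. \<sigma> k \<noteq> x) \<and>
     (\<forall>e>0. \<exists>N. \<forall>m\<ge>N. \<forall>n\<ge>N. alex_angle x (\<sigma> m) (\<sigma> n) < e)"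

definition dir_angle :: "'a::metric_space \<Rightarrow> (nat \<Rightarrow> 'a) \<Rightarrow> (nat \<Rightarrow> 'a) \<Rightarrow> real" where
  "dir_angle x \<sigma> \<tau> = lim (\<lambda>k. alex_angle x (\<sigma> k) (\<tau> k))"

text \<open>A tangent vector t\<gamma> is represented by a pair (t, \<sigma>); two representatives denote
  the same element of T_xX iff their d_x-distance is 0.\<close>
type_synonym 'a tvec = "real \<times> (nat \<Rightarrow> 'a)"

definition tangent :: "'a::metric_space \<Rightarrow> 'a tvec set" where
  "tangent x = {(t, \<sigma>). t = 0 \<or> (t > 0 \<and> dir_seq x \<sigma>)}"

definition tzero :: "'a \<Rightarrow> 'a tvec" where
  "tzero x = (0, \<lambda>_. x)"

definition tnorm :: "'a tvec \<Rightarrow> real" where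
  "tnorm u = fst u"

definition tinner :: "'a::metric_space \<Rightarrow> 'a tvec \<Rightarrow> 'a tvec \<Rightarrow> real" where
  "tinner x u v = fst u * fst v * cos (dir_angle x (snd u) (snd v))"

definition tdist :: "'a::metric_space \<Rightarrow> 'a tvec \<Rightarrow> 'a tvec \<Rightarrow> real" where
  "tdist x u v = sqrt ((fst u)\<^sup>2 + (fst v)\<^sup>2 - 2 * tinner x u v)"

definition tscale :: "real \<Rightarrow> 'a tvec \<Rightarrow> 'a tvec" where
  "tscale c u = (c * fst u, snd u)"

definition tlog :: "'a::metric_space \<Rightarrow> 'a \<Rightarrow> 'a tvec" where
  "tlog x a = (if a = x then tzero x else (dist x a, \<lambda>_. a))"

text \<open>Membership in a subset of T_xX, up to identification of representatives.\<close>
definition tmem :: "'a::metric_space \<Rightarrow> 'a tvec \<Rightarrow> 'a tvec set \<Rightarrow> bool" where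
  "tmem x u S \<longleftrightarrow> (\<exists>v\<in>S. tdist x u v = 0)"

definition tangent_separable :: "'a::metric_space \<Rightarrow> bool" where
  "tangent_separable x \<longleftrightarrow> (\<exists>D \<subseteq> tangent x. countable D \<and>
      (\<forall>u\<in>tangent x. \<forall>e>0. \<exists>v\<in>D. tdist x u v < e))"

definition vf_monotone :: "('a::metric_space \<Rightarrow> 'a tvec set) \<Rightarrow> bool" where
  "vf_monotone B \<longleftrightarrow> (\<forall>x y. \<forall>u\<in>B x. \<forall>v\<in>B y.
       tinner x u (tlog x y) \<le> - tinner y v (tlog y x))"

definition vf_strongly_monotone :: "('a::metric_space \<Rightarrow> 'a tvec set) \<Rightarrow> real \<Rightarrow> bool" where
  "vf_strongly_monotone B \<alpha> \<longleftrightarrow> \<alpha> > 0 \<and> (\<forall>x y. \<forall>u\<in>B x. \<forall>v\<in>B y.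
       tinner x u (tlog x y) \<le> - tinner y v (tlog y x) - \<alpha> * (dist x y)\<^sup>2)"

definition is_resolvent :: "('a::metric_space \<Rightarrow> 'a tvec set) \<Rightarrow> real \<Rightarrow> 'a \<Rightarrow> 'a \<Rightarrow> bool" where
  "is_resolvent B lam x z \<longleftrightarrow> tmem z (tscale (1 / lam) (tlog z x)) (B z)"

definition resolvent :: "('a::metric_space \<Rightarrow> 'a tvec set) \<Rightarrow> real \<Rightarrow> 'a \<Rightarrow> 'a" where
  "resolvent B lam x = (THE z. is_resolvent B lam x z)"

definition surjectivity_cond :: "('a::metric_space \<Rightarrow> 'a tvec set) \<Rightarrow> bool" where
  "surjectivity_cond B \<longleftrightarrow> (\<forall>lam>0. \<forall>x. \<exists>z. is_resolvent B lam x z)"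

definition random_monotone_vf ::
  "'e measure \<Rightarrow> ('e \<Rightarrow> 'a::metric_space \<Rightarrow> 'a tvec set) \<Rightarrow> bool" where
  "random_monotone_vf \<mu> A \<longleftrightarrow>
     (\<forall>s\<in>space \<mu>. (\<forall>x. A s x \<subseteq> tangent x) \<and> vf_monotone (A s) \<and> surjectivity_cond (A s)) \<and>
     (\<forall>lam>0. \<forall>x. (\<lambda>s. resolvent (A s) lam x) \<in> measurable \<mu> borel)"

text \<open>Measurability of a T_xX-valued map (T_xX separable, so Borel sets are generated by
  the distance functions to points).\<close>
definition tmeasurable :: "'e measure \<Rightarrow> 'a::metric_space \<Rightarrow> ('e \<Rightarrow> 'a tvec) \<Rightarrow> bool" where
  "tmeasurable \<mu> x \<phi> \<longleftrightarrow> (\<forall>v\<in>tangent x. (\<lambda>s. tdist x (\<phi> s) v) \<in> borel_measurable \<mu>)"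

definition tLp :: "nat \<Rightarrow> 'e measure \<Rightarrow> 'a::metric_space \<Rightarrow> ('e \<Rightarrow> 'a tvec) \<Rightarrow> bool" where
  "tLp p \<mu> x \<phi> \<longleftrightarrow> tmeasurable \<mu> x \<phi> \<and> (\<forall>s\<in>space \<mu>. \<phi> s \<in> tangent x) \<and>
     (\<integral>\<^sup>+ s. ennreal ((tdist x (\<phi> s) (tzero x)) ^ p) \<partial>\<mu>) < \<infinity>"

definition selections :: "nat \<Rightarrow> 'e measure \<Rightarrow> ('e \<Rightarrow> 'a::metric_space \<Rightarrow> 'a tvec set) \<Rightarrow> 'a
    \<Rightarrow> ('e \<Rightarrow> 'a tvec) set" where
  "selections p \<mu> A x = {\<phi>. tLp p \<mu> x \<phi> \<and> (\<forall>s\<in>space \<mu>. tmem x (\<phi> s) (A s x))}"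

text \<open>b is (a representative of) the barycenter / integral of \<phi> in T_xX.\<close>
definition tbarycenter :: "'e measure \<Rightarrow> 'a::metric_space \<Rightarrow> ('e \<Rightarrow> 'a tvec) \<Rightarrow> 'a tvec \<Rightarrow> bool" where
  "tbarycenter \<mu> x \<phi> b \<longleftrightarrow> b \<in> tangent x \<and>
     (\<forall>z\<in>tangent x.
        (\<integral>s. (tdist x b (\<phi> s))\<^sup>2 - (tdist x (\<phi> s) (tzero x))\<^sup>2 \<partial>\<mu>)
          \<le> (\<integral>s. (tdist x z (\<phi> s))\<^sup>2 - (tdist x (\<phi> s) (tzero x))\<^sup>2 \<partial>\<mu>))"

primrec prox_iter :: "('e \<Rightarrow> 'a::metric_space \<Rightarrow> 'a tvec set) \<Rightarrow> (nat \<Rightarrow> real)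
    \<Rightarrow> (nat \<Rightarrow> 'w \<Rightarrow> 'e) \<Rightarrow> 'a \<Rightarrow> nat \<Rightarrow> 'w \<Rightarrow> 'a" where
  "prox_iter A lam \<xi> x0 0 \<omega> = x0"
| "prox_iter A lam \<xi> x0 (Suc n) \<omega> =
     resolvent (A (\<xi> (Suc n) \<omega>)) (lam n) (prox_iter A lam \<xi> x0 n \<omega>)"

text \<open>F_n = sigma(xi_1, ..., xi_n) on Omega (trivial for n = 0).\<close>
definition natural_filtration :: "'w measure \<Rightarrow> 'e measure \<Rightarrow> (nat \<Rightarrow> 'w \<Rightarrow> 'e) \<Rightarrow> nat \<Rightarrow> 'w measure" where
  "natural_filtration P \<mu> \<xi> n =
     sigma (space P) (\<Union>i\<in>{1..n}. {\<xi> i -` B \<inter> space P | B. B \<in> sets \<mu>})"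

end

theory Submission
  imports Defs
begin

lemma geod_ok:
  fixes x y :: "'a::complete_space"
  assumes H: "hadamard_space TYPE('a)"
  shows "geodesic_path (geod x y) (dist x y) \<and> geod x y 0 = x \<and> geod x y (dist x y) = y"
proof -
  have "\<exists>\<gamma>. geodesic_path \<gamma> (dist x y) \<and> \<gamma> 0 = x \<and> \<gamma> (dist x y) = y"
    using H unfolding hadamard_space_def by blast
  then show ?thesis unfolding geod_def by (rule someI_ex)
qed

lemma geod_dist:
  fixes x y :: "'a::complete_space"
  assumes H: "hadamard_space TYPE('a)" and s: "0 \<le> s" "s \<le> dist x y"
  shows "dist x (geod x y s) = s"
proof -
  have g: "geodesic_path (geod x y) (dist x y)" and g0: "geod x y 0 = x" using geod_ok[OF H] by auto
  have "dist (geod x y 0) (geod x y s) = \<bar>0 - s\<bar>"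
    using g s unfolding geodesic_path_def by auto
  then show ?thesis using g0 s by simp
qed

lemma geod_dist2:
  fixes x y :: "'a::complete_space"
  assumes H: "hadamard_space TYPE('a)" and s: "0 \<le> s" "s \<le> dist x y" "0 \<le> t" "t \<le> dist x y"
  shows "dist (geod x y s) (geod x y t) = \<bar>s - t\<bar>"
  using geod_ok[OF H, of x y] s unfolding geodesic_path_def by auto

lemma cat0_step:
  fixes x y q :: "'a::complete_space"
  assumes H: "hadamard_space TYPE('a)" and s: "0 < s'" "s' \<le> s" "s \<le> dist x y"
  shows "(dist (geod x y s') q)\<^sup>2 \<le> (1 - s'/s) * (dist x q)\<^sup>2 + (s'/s) * (dist (geod x y s) q)\<^sup>2
            - (s'/s) * (1 - s'/s) * s\<^sup>2"
proof -
  let ?g = "geod x y"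
  have g: "geodesic_path ?g (dist x y)" and g0: "?g 0 = x" using geod_ok[OF H] by auto
  have gs: "geodesic_path ?g s" using g s unfolding geodesic_path_def by auto
  have t: "s'/s \<in> {0..1}" using s by auto
  have "(dist (?g (s'/s * s)) q)\<^sup>2 \<le> (1 - s'/s) * (dist (?g 0) q)\<^sup>2 + (s'/s) * (dist (?g s) q)\<^sup>2
                                  - (s'/s) * (1 - s'/s) * (dist (?g 0) (?g s))\<^sup>2"
    using H gs t unfolding hadamard_space_def by blast
  moreover have "s'/s * s = s'" using s by auto
  moreover have "dist (?g 0) (?g s) = s" using geod_dist[OF H, of s x y] s g0 by simp
  ultimately show ?thesis using g0 by simp
qed

definition cratio :: "'a::metric_space \<Rightarrow> 'a \<Rightarrow> 'a \<Rightarrow> real" where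
  "cratio x p q = ((dist x p)\<^sup>2 + (dist x q)\<^sup>2 - (dist p q)\<^sup>2) / (2 * dist x p * dist x q)"

lemma cratio_bounds:
  fixes x p q :: "'a::metric_space"
  assumes "p \<noteq> x" "q \<noteq> x"
  shows "-1 \<le> cratio x p q" "cratio x p q \<le> 1"
proof -
  let ?a = "dist x p" and ?b = "dist x q" and ?c = "dist p q"
  have a: "?a > 0" "?b > 0" using assms by auto
  have t1: "?c \<le> ?a + ?b" by (metis dist_commute dist_triangle)
  have t2: "?a \<le> ?b + ?c" by (metis dist_commute dist_triangle)
  have t3: "?b \<le> ?a + ?c" by (metis dist_commute dist_triangle)
  have c0: "?c \<ge> 0" by simp
  have "?c\<^sup>2 \<le> (?a + ?b)\<^sup>2" using t1 c0 by (simp add: power_mono)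
  then have "-(2 * ?a * ?b) \<le> ?a\<^sup>2 + ?b\<^sup>2 - ?c\<^sup>2" by (simp add: power2_eq_square algebra_simps)
  then show "-1 \<le> cratio x p q" unfolding cratio_def using a by (simp add: le_divide_eq)
  have "\<bar>?a - ?b\<bar> \<le> ?c" using t2 t3 by linarith
  then have "(?a - ?b)\<^sup>2 \<le> ?c\<^sup>2"
    by (metis abs_ge_zero power2_abs power_mono)
  then have "?a\<^sup>2 + ?b\<^sup>2 - ?c\<^sup>2 \<le> 2 * ?a * ?b" by (simp add: power2_eq_square algebra_simps)
  then show "cratio x p q \<le> 1" unfolding cratio_def using a by (simp add: divide_le_eq)
qed

lemma cangle_cratio: "cangle x p q = arccos (cratio x p q)"
  unfolding cangle_def cratio_def by simp

lemma cratio_sym: "cratio x p q = cratio x q p"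
  unfolding cratio_def by (simp add: dist_commute algebra_simps)

lemma cangle_sym: "cangle x p q = cangle x q p"
  by (simp add: cangle_cratio cratio_sym)

lemma cangle_range:
  fixes x p q :: "'a::metric_space"
  assumes "p \<noteq> x" "q \<noteq> x"
  shows "0 \<le> cangle x p q" "cangle x p q \<le> pi"
  using cratio_bounds[OF assms] by (auto simp: cangle_cratio intro: arccos_lbound arccos_ubound)

lemma cos_cangle:
  fixes x p q :: "'a::metric_space"
  assumes "p \<noteq> x" "q \<noteq> x"
  shows "(dist p q)\<^sup>2 = (dist x p)\<^sup>2 + (dist x q)\<^sup>2 - 2 * dist x p * dist x q * cos (cangle x p q)"
proof -
  have "cos (cangle x p q) = cratio x p q"
    using cratio_bounds[OF assms] by (simp add: cangle_cratio cos_arccos)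
  moreover have "dist x p > 0" "dist x q > 0" using assms by auto
  ultimately show ?thesis unfolding cratio_def by (simp add: field_simps)
qed

lemma cangle_mono1:
  fixes x y q :: "'a::complete_space"
  assumes H: "hadamard_space TYPE('a)" and s: "0 < s'" "s' \<le> s" "s \<le> dist x y" and q: "q \<noteq> x"
  shows "cangle x (geod x y s') q \<le> cangle x (geod x y s) q"
proof -
  let ?g = "geod x y"
  have d1: "dist x (?g s') = s'" and d2: "dist x (?g s) = s" using geod_dist[OF H] s by auto
  have n1: "?g s' \<noteq> x" and n2: "?g s \<noteq> x" using d1 d2 s by auto
  let ?b = "dist x q" and ?c = "dist (?g s) q" and ?c' = "dist (?g s') q"
  have b: "?b > 0" using q by simp
  have cat: "?c'\<^sup>2 \<le> (1 - s'/s) * ?b\<^sup>2 + (s'/s) * ?c\<^sup>2 - (s'/s) * (1 - s'/s) * s\<^sup>2"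
    using cat0_step[OF H s, of q] by simp
  have sp: "s > 0" using s by simp
  have "s * ?c'\<^sup>2 \<le> s * ((1 - s'/s) * ?b\<^sup>2 + (s'/s) * ?c\<^sup>2 - (s'/s) * (1 - s'/s) * s\<^sup>2)"
    using cat sp by (simp add: mult_left_mono)
  also have "\<dots> = (s - s') * ?b\<^sup>2 + s' * ?c\<^sup>2 - s' * (s - s') * s"
    using sp by (simp add: field_simps power2_eq_square)
  finally have key: "s * ?c'\<^sup>2 \<le> (s - s') * ?b\<^sup>2 + s' * ?c\<^sup>2 - s' * (s - s') * s" .
  have "(s\<^sup>2 + ?b\<^sup>2 - ?c\<^sup>2) * s' \<le> (s'\<^sup>2 + ?b\<^sup>2 - ?c'\<^sup>2) * s"
    using key by (simp add: power2_eq_square algebra_simps)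
  then have "(s\<^sup>2 + ?b\<^sup>2 - ?c\<^sup>2) * s' * (2 * ?b) \<le> (s'\<^sup>2 + ?b\<^sup>2 - ?c'\<^sup>2) * s * (2 * ?b)"
    using b by (intro mult_right_mono) auto
  then have le: "cratio x (?g s) q \<le> cratio x (?g s') q"
    unfolding cratio_def d1 d2 using s b sp
    by (simp add: field_simps)
  show ?thesis unfolding cangle_cratio
    by (rule arccos_le_arccos) (use cratio_bounds[OF n2 q] cratio_bounds[OF n1 q] le in auto)
qed


definition cf :: "'a::metric_space \<Rightarrow> 'a \<Rightarrow> 'a \<Rightarrow> real \<Rightarrow> real \<Rightarrow> real" where
  "cf x y z s t = cangle x (geod x y s) (geod x z t)"

definition aset :: "'a::metric_space \<Rightarrow> 'a \<Rightarrow> 'a \<Rightarrow> real set" where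
  "aset x y z = {cf x y z s t | s t. 0 < s \<and> s \<le> dist x y \<and> 0 < t \<and> t \<le> dist x z}"

lemma geod_ne:
  fixes x y :: "'a::complete_space"
  assumes H: "hadamard_space TYPE('a)" and "0 < s" "s \<le> dist x y"
  shows "geod x y s \<noteq> x"
  using geod_dist[OF H, of s x y] assms by auto

lemma cf_mono:
  fixes x y z :: "'a::complete_space"
  assumes H: "hadamard_space TYPE('a)"
    and s: "0 < s'" "s' \<le> s" "s \<le> dist x y" and t: "0 < t'" "t' \<le> t" "t \<le> dist x z"
  shows "cf x y z s' t' \<le> cf x y z s t"
proof -
  have n1: "geod x z t' \<noteq> x" using geod_ne[OF H] t by auto
  have n2: "geod x y s \<noteq> x" using geod_ne[OF H] s by auto
  have "cf x y z s' t' \<le> cf x y z s t'"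
    unfolding cf_def by (rule cangle_mono1[OF H s n1])
  also have "\<dots> = cangle x (geod x z t') (geod x y s)" unfolding cf_def by (rule cangle_sym)
  also have "\<dots> \<le> cangle x (geod x z t) (geod x y s)" by (rule cangle_mono1[OF H t n2])
  also have "\<dots> = cf x y z s t" unfolding cf_def by (rule cangle_sym)
  finally show ?thesis .
qed

lemma cf_range:
  fixes x y z :: "'a::complete_space"
  assumes H: "hadamard_space TYPE('a)"
    and s: "0 < s" "s \<le> dist x y" and t: "0 < t" "t \<le> dist x z"
  shows "0 \<le> cf x y z s t" "cf x y z s t \<le> pi"
  unfolding cf_def using cangle_range[OF geod_ne[OF H s] geod_ne[OF H t]] by auto

lemma aset_ne:
  fixes x y z :: "'a::complete_space"
  assumes "y \<noteq> x" "z \<noteq> x"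
  shows "cf x y z (dist x y) (dist x z) \<in> aset x y z"
  unfolding aset_def using assms by (intro CollectI exI[of _ "dist x y"] exI[of _ "dist x z"]) auto

lemma aset_bdd:
  fixes x y z :: "'a::complete_space"
  assumes H: "hadamard_space TYPE('a)"
  shows "bdd_below (aset x y z)"
  unfolding aset_def bdd_below_def using cf_range[OF H] by blast

lemma alex_inf:
  fixes x y z :: "'a::complete_space"
  assumes H: "hadamard_space TYPE('a)" and y: "y \<noteq> x" and z: "z \<noteq> x"
  shows "alex_angle x y z = Inf (aset x y z)"
proof -
  let ?I = "Inf (aset x y z)"
  let ?f = "\<lambda>(s,t). cangle x (geod x y s) (geod x z t)"
  have dy: "dist x y > 0" and dz: "dist x z > 0" using y z by auto
  have ne: "aset x y z \<noteq> {}" using aset_ne[OF y z] by auto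
  have lim: "(?f \<longlongrightarrow> ?I) (at_right 0 \<times>\<^sub>F at_right 0)"
  proof (rule order_tendstoI)
    fix a assume a: "a < ?I"
    show "\<forall>\<^sub>F p in at_right 0 \<times>\<^sub>F at_right 0. a < ?f p"
      unfolding eventually_prod_filter
    proof (intro exI conjI allI impI)
      show "\<forall>\<^sub>F s in at_right 0. s \<in> {0<..<dist x y}" by (rule eventually_at_right_real[OF dy])
      show "\<forall>\<^sub>F s in at_right 0. s \<in> {0<..<dist x z}" by (rule eventually_at_right_real[OF dz])
      fix s t :: real assume "s \<in> {0<..<dist x y}" "t \<in> {0<..<dist x z}"
      then have "cf x y z s t \<in> aset x y z" unfolding aset_def by (intro CollectI exI[of _ s] exI[of _ t]) auto
      then have "?I \<le> cf x y z s t" by (rule cInf_lower[OF _ aset_bdd[OF H]])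
      then show "a < ?f (s, t)" using a unfolding cf_def by simp
    qed
  next
    fix a assume a: "?I < a"
    obtain v where v: "v \<in> aset x y z" "v < a" using cInf_lessD[OF ne a] by blast
    then obtain s0 t0 where st: "v = cf x y z s0 t0" "0 < s0" "s0 \<le> dist x y" "0 < t0" "t0 \<le> dist x z"
      unfolding aset_def by blast
    show "\<forall>\<^sub>F p in at_right 0 \<times>\<^sub>F at_right 0. ?f p < a"
      unfolding eventually_prod_filter
    proof (intro exI conjI allI impI)
      show "\<forall>\<^sub>F s in at_right 0. s \<in> {0<..<s0}" by (rule eventually_at_right_real) (use st in auto)
      show "\<forall>\<^sub>F s in at_right 0. s \<in> {0<..<t0}" by (rule eventually_at_right_real) (use st in auto)
      fix s t :: real assume "s \<in> {0<..<s0}" "t \<in> {0<..<t0}"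
      then have "cf x y z s t \<le> cf x y z s0 t0" by (intro cf_mono[OF H]) (use st in auto)
      then show "?f (s, t) < a" using v st unfolding cf_def by simp
    qed
  qed
  have "at_right (0::real) \<times>\<^sub>F at_right (0::real) \<noteq> bot" using prod_filter_eq_bot trivial_limit_at_right_real by metis
  then show ?thesis unfolding alex_angle_def using tendsto_Lim lim by blast
qed

lemma ang_le_cf:
  fixes x y z :: "'a::complete_space"
  assumes H: "hadamard_space TYPE('a)"
    and s: "0 < s" "s \<le> dist x y" and t: "0 < t" "t \<le> dist x z"
  shows "alex_angle x y z \<le> cf x y z s t"
proof -
  have y: "y \<noteq> x" "z \<noteq> x" using s t by auto
  have "cf x y z s t \<in> aset x y z" unfolding aset_def using s t by (intro CollectI exI[of _ s] exI[of _ t]) auto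
  then show ?thesis unfolding alex_inf[OF H y] by (rule cInf_lower[OF _ aset_bdd[OF H]])
qed

lemma ang_nonneg:
  fixes x y z :: "'a::complete_space"
  assumes H: "hadamard_space TYPE('a)" and y: "y \<noteq> x" and z: "z \<noteq> x"
  shows "0 \<le> alex_angle x y z"
  unfolding alex_inf[OF H y z]
  by (rule cInf_greatest) (use aset_ne[OF y z] cf_range[OF H] in \<open>auto simp: aset_def\<close>)

lemma ang_le_cangle:
  fixes x y z :: "'a::complete_space"
  assumes H: "hadamard_space TYPE('a)" and y: "y \<noteq> x" and z: "z \<noteq> x"
  shows "alex_angle x y z \<le> cangle x y z"
proof -
  have "alex_angle x y z \<le> cf x y z (dist x y) (dist x z)"
    by (rule ang_le_cf[OF H]) (use y z in auto)
  then show ?thesis unfolding cf_def using geod_ok[OF H, of x y] geod_ok[OF H, of x z] by simp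
qed

lemma ang_le_pi:
  fixes x y z :: "'a::complete_space"
  assumes H: "hadamard_space TYPE('a)" and y: "y \<noteq> x" and z: "z \<noteq> x"
  shows "alex_angle x y z \<le> pi"
  using ang_le_cangle[OF H y z] cangle_range[OF y z] by linarith

lemma aset_sym: "aset x y z = aset x z y"
  unfolding aset_def cf_def using cangle_sym by blast

lemma ang_sym:
  fixes x y z :: "'a::complete_space"
  assumes H: "hadamard_space TYPE('a)" and y: "y \<noteq> x" and z: "z \<noteq> x"
  shows "alex_angle x y z = alex_angle x z y"
  using alex_inf[OF H y z] alex_inf[OF H z y] aset_sym by metis

lemma ang_self:
  fixes x y :: "'a::complete_space"
  assumes H: "hadamard_space TYPE('a)" and y: "y \<noteq> x"
  shows "alex_angle x y y = 0"
proof -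
  let ?d = "dist x y"
  have dp: "?d > 0" using y by simp
  have "alex_angle x y y \<le> cf x y y ?d ?d" by (rule ang_le_cf[OF H]) (use dp in auto)
  also have "cf x y y ?d ?d = 0"
  proof -
    have "cratio x (geod x y ?d) (geod x y ?d) = 1"
      unfolding cratio_def using geod_dist[OF H, of ?d x y] dp by (simp add: power2_eq_square)
    then show ?thesis unfolding cf_def cangle_cratio by simp
  qed
  finally show ?thesis using ang_nonneg[OF H y y] by simp
qed

lemma ang_approx:
  fixes x y z :: "'a::complete_space"
  assumes H: "hadamard_space TYPE('a)" and y: "y \<noteq> x" and z: "z \<noteq> x" and e: "e > 0"
  obtains s0 t0 where "0 < s0" "s0 \<le> dist x y" "0 < t0" "t0 \<le> dist x z"
    "\<And>s t. 0 < s \<Longrightarrow> s \<le> s0 \<Longrightarrow> 0 < t \<Longrightarrow> t \<le> t0 \<Longrightarrow> cf x y z s t < alex_angle x y z + e"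
proof -
  have ne: "aset x y z \<noteq> {}" using aset_ne[OF y z] by auto
  have "Inf (aset x y z) < alex_angle x y z + e" using alex_inf[OF H y z] e by simp
  then obtain v where v: "v \<in> aset x y z" "v < alex_angle x y z + e" using cInf_lessD[OF ne] by blast
  then obtain s0 t0 where st: "v = cf x y z s0 t0" "0 < s0" "s0 \<le> dist x y" "0 < t0" "t0 \<le> dist x z"
    unfolding aset_def by blast
  show ?thesis
  proof (rule that[OF st(2-5)])
    fix s t :: real assume "0 < s" "s \<le> s0" "0 < t" "t \<le> t0"
    then have "cf x y z s t \<le> cf x y z s0 t0" by (intro cf_mono[OF H]) (use st in auto)
    then show "cf x y z s t < alex_angle x y z + e" using v st by simp
  qed
qed

lemma cos_law:
  fixes x y z :: "'a::complete_space"
  assumes H: "hadamard_space TYPE('a)" and y: "y \<noteq> x" and z: "z \<noteq> x"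
  shows "(dist y z)\<^sup>2 \<ge> (dist x y)\<^sup>2 + (dist x z)\<^sup>2 - 2 * dist x y * dist x z * cos (alex_angle x y z)"
proof -
  have "cos (cangle x y z) \<le> cos (alex_angle x y z)"
    using ang_le_cangle[OF H y z] cangle_range[OF y z] ang_nonneg[OF H y z]
    by (subst cos_mono_le_eq) auto
  then have "2 * dist x y * dist x z * cos (cangle x y z) \<le> 2 * dist x y * dist x z * cos (alex_angle x y z)"
    by (intro mult_left_mono) auto
  then show ?thesis using cos_cangle[OF y z] by linarith
qed

lemma plane_lemma:
  fixes e \<alpha> \<beta> :: real
  assumes e: "e > 0" and ab: "0 < \<beta>" "\<beta> < \<alpha>" "\<alpha> < pi"
  obtains \<rho> r where "0 < \<rho>" "\<rho> \<le> 2 * e" "0 < r" "r < 1"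
    "e\<^sup>2 + \<rho>\<^sup>2 - 2 * e * \<rho> * cos \<beta> = r\<^sup>2 * (2 * e\<^sup>2 * (1 - cos \<alpha>))"
    "\<rho>\<^sup>2 + e\<^sup>2 - 2 * \<rho> * e * cos (\<alpha> - \<beta>) = (1 - r)\<^sup>2 * (2 * e\<^sup>2 * (1 - cos \<alpha>))"
proof -
  have sb: "sin \<beta> > 0" using ab by (intro sin_gt_zero) auto
  have sa: "sin \<alpha> > 0" using ab by (intro sin_gt_zero) auto
  have sab: "sin (\<alpha> - \<beta>) > 0" using ab by (intro sin_gt_zero) auto
  define r where "r = sin \<beta> / (sin \<beta> + sin (\<alpha> - \<beta>))"
  have r0: "0 < r" "r < 1" unfolding r_def using sb sab by (auto simp: field_simps)
  have rr: "r * (sin \<beta> + sin (\<alpha> - \<beta>)) = sin \<beta>" unfolding r_def using sb sab by simp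
  define Y1 where "Y1 = (1 - r) * e + r * e * cos \<alpha>"
  define Y2 where "Y2 = r * e * sin \<alpha>"
  define \<rho> where "\<rho> = Y2 / sin \<beta>"
  have a: "Y1 * sin \<beta> = Y2 * cos \<beta>"
  proof -
    have "Y2 * cos \<beta> - Y1 * sin \<beta> = e * (r * (sin \<alpha> * cos \<beta> - cos \<alpha> * sin \<beta>) - (1 - r) * sin \<beta>)"
      unfolding Y1_def Y2_def by (simp add: algebra_simps)
    also have "\<dots> = e * (r * (sin \<beta> + sin (\<alpha> - \<beta>)) - sin \<beta>)"
      by (simp add: sin_diff algebra_simps)
    also have "\<dots> = 0" using rr by simp
    finally show ?thesis by simp
  qed
  have Y2p: "Y2 > 0" unfolding Y2_def using r0 e sa by simp
  have rp: "\<rho> > 0" unfolding \<rho>_def using Y2p sb by simp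
  have Y2e: "Y2 = \<rho> * sin \<beta>" unfolding \<rho>_def using sb by simp
  have Y1e: "Y1 = \<rho> * cos \<beta>"
  proof -
    have "Y1 * sin \<beta> = (\<rho> * cos \<beta>) * sin \<beta>" using a Y2e by (simp add: algebra_simps)
    then show ?thesis using sb by simp
  qed
  have rho2: "\<rho>\<^sup>2 = Y1\<^sup>2 + Y2\<^sup>2"
  proof -
    have "Y1\<^sup>2 + Y2\<^sup>2 = \<rho>\<^sup>2 * ((sin \<beta>)\<^sup>2 + (cos \<beta>)\<^sup>2)" unfolding Y1e Y2e
      by (simp only: power_mult_distrib distrib_left add.commute)
    then show ?thesis by simp
  qed
  have "\<bar>Y1\<bar> \<le> e"
  proof -
    have "\<bar>r * e * cos \<alpha>\<bar> \<le> r * e" using r0 e abs_cos_le_one[of \<alpha>]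
      by (simp add: abs_mult mult_left_le)
    then have c: "r * e * cos \<alpha> \<le> r * e" "- (r * e) \<le> r * e * cos \<alpha>" by (auto simp: abs_le_iff)
    have y: "Y1 = e - r * e + r * e * cos \<alpha>" unfolding Y1_def by (simp add: algebra_simps)
    have "r * e \<le> e" "0 \<le> r * e" using r0 e by auto
    then show ?thesis using c y by (simp add: abs_le_iff)
  qed
  moreover have "\<bar>Y2\<bar> \<le> e"
  proof -
    have "\<bar>Y2\<bar> \<le> r * e" unfolding Y2_def using r0 e abs_sin_le_one[of \<alpha>]
      by (simp add: abs_mult mult_left_le)
    then show ?thesis using r0 e by (smt (verit) mult_left_le_one_le)
  qed
  ultimately have "Y1\<^sup>2 \<le> e\<^sup>2" "Y2\<^sup>2 \<le> e\<^sup>2" using e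
    by (metis abs_le_square_iff abs_of_pos)+
  moreover have "(2 * e)\<^sup>2 = 4 * e\<^sup>2" "e\<^sup>2 > 0" using e by (auto simp: power_mult_distrib)
  ultimately have "Y1\<^sup>2 + Y2\<^sup>2 \<le> (2 * e)\<^sup>2" by linarith
  then have "\<rho>\<^sup>2 \<le> (2 * e)\<^sup>2" by (simp only: rho2)
  moreover have "0 \<le> 2 * e" using e by simp
  ultimately have rle: "\<rho> \<le> 2 * e" by (rule power2_le_imp_le)
  have sc: "(sin \<alpha>)\<^sup>2 = 1 - (cos \<alpha>)\<^sup>2" by (simp add: sin_squared_eq)
  have key: "(c * e * (1 - cos \<alpha>))\<^sup>2 + (c * e * sin \<alpha>)\<^sup>2 = c\<^sup>2 * (2 * e\<^sup>2 * (1 - cos \<alpha>))" for c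
  proof -
    have "(c * e * (1 - cos \<alpha>))\<^sup>2 + (c * e * sin \<alpha>)\<^sup>2 = c\<^sup>2 * e\<^sup>2 * ((1 - cos \<alpha>)\<^sup>2 + (sin \<alpha>)\<^sup>2)"
      by (simp only: power_mult_distrib distrib_left)
    also have "(1 - cos \<alpha>)\<^sup>2 + (sin \<alpha>)\<^sup>2 = 2 * (1 - cos \<alpha>)"
      using sc by (simp add: power2_diff)
    finally show ?thesis by simp
  qed
  have d1: "e - Y1 = r * e * (1 - cos \<alpha>)" unfolding Y1_def by (simp add: algebra_simps)
  have d2: "Y1 - e * cos \<alpha> = (1 - r) * e * (1 - cos \<alpha>)" unfolding Y1_def by (simp add: algebra_simps)
  have d3: "Y2 - e * sin \<alpha> = - ((1 - r) * e * sin \<alpha>)" unfolding Y2_def by (simp add: algebra_simps)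
  have eq1: "e\<^sup>2 + \<rho>\<^sup>2 - 2 * e * \<rho> * cos \<beta> = r\<^sup>2 * (2 * e\<^sup>2 * (1 - cos \<alpha>))"
  proof -
    have "(e - Y1)\<^sup>2 + Y2\<^sup>2 = e\<^sup>2 - 2 * e * Y1 + (Y1\<^sup>2 + Y2\<^sup>2)" by (simp add: power2_diff)
    also have "\<dots> = e\<^sup>2 + \<rho>\<^sup>2 - 2 * e * \<rho> * cos \<beta>" by (simp only: rho2[symmetric]) (simp add: Y1e)
    finally have "e\<^sup>2 + \<rho>\<^sup>2 - 2 * e * \<rho> * cos \<beta> = (e - Y1)\<^sup>2 + Y2\<^sup>2" by simp
    also have "\<dots> = r\<^sup>2 * (2 * e\<^sup>2 * (1 - cos \<alpha>))" unfolding d1 Y2_def by (rule key)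
    finally show ?thesis .
  qed
  have eq2: "\<rho>\<^sup>2 + e\<^sup>2 - 2 * \<rho> * e * cos (\<alpha> - \<beta>) = (1 - r)\<^sup>2 * (2 * e\<^sup>2 * (1 - cos \<alpha>))"
  proof -
    have "(Y1 - e * cos \<alpha>)\<^sup>2 + (Y2 - e * sin \<alpha>)\<^sup>2
          = (Y1\<^sup>2 + Y2\<^sup>2) + e\<^sup>2 - 2 * e * (Y1 * cos \<alpha> + Y2 * sin \<alpha>)"
      by (simp add: power2_diff power_mult_distrib algebra_simps)
        (metis distrib_left mult.right_neutral sin_cos_squared_add add.commute)
    also have "Y1 * cos \<alpha> + Y2 * sin \<alpha> = \<rho> * cos (\<alpha> - \<beta>)"
      unfolding Y1e Y2e cos_diff by (simp add: algebra_simps)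
    finally have "(Y1 - e * cos \<alpha>)\<^sup>2 + (Y2 - e * sin \<alpha>)\<^sup>2 = \<rho>\<^sup>2 + e\<^sup>2 - 2 * \<rho> * e * cos (\<alpha> - \<beta>)"
      by (simp only: rho2[symmetric]) (simp add: algebra_simps)
    then have "\<rho>\<^sup>2 + e\<^sup>2 - 2 * \<rho> * e * cos (\<alpha> - \<beta>) = ((1 - r) * e * (1 - cos \<alpha>))\<^sup>2 + ((1 - r) * e * sin \<alpha>)\<^sup>2"
      unfolding d2 d3 by simp
    also have "\<dots> = (1 - r)\<^sup>2 * (2 * e\<^sup>2 * (1 - cos \<alpha>))" by (rule key)
    finally show ?thesis .
  qed
  show ?thesis by (rule that[OF rp rle r0 eq1 eq2])
qed


lemma ang_tri:
  fixes x y z w :: "'a::complete_space"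
  assumes H: "hadamard_space TYPE('a)" and y: "y \<noteq> x" and z: "z \<noteq> x" and w: "w \<noteq> x"
  shows "alex_angle x y z \<le> alex_angle x y w + alex_angle x w z"
proof (rule ccontr)
  let ?A = "alex_angle x y z" and ?A1 = "alex_angle x y w" and ?A2 = "alex_angle x w z"
  assume "\<not> ?thesis"
  then have gap: "?A1 + ?A2 < ?A" by simp
  define \<delta> where "\<delta> = (?A - ?A1 - ?A2) / 3"
  have \<delta>: "\<delta> > 0" using gap by (simp add: \<delta>_def)
  obtain s1 r1 where s1: "0 < s1" "s1 \<le> dist x y" "0 < r1" "r1 \<le> dist x w"
     and b1: "\<And>s t. 0 < s \<Longrightarrow> s \<le> s1 \<Longrightarrow> 0 < t \<Longrightarrow> t \<le> r1 \<Longrightarrow> cf x y w s t < ?A1 + \<delta>"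
    using ang_approx[OF H y w \<delta>] by blast
  obtain r2 t2 where r2: "0 < r2" "r2 \<le> dist x w" "0 < t2" "t2 \<le> dist x z"
     and b2: "\<And>s t. 0 < s \<Longrightarrow> s \<le> r2 \<Longrightarrow> 0 < t \<Longrightarrow> t \<le> t2 \<Longrightarrow> cf x w z s t < ?A2 + \<delta>"
    using ang_approx[OF H w z \<delta>] by blast
  define e where "e = min (min s1 t2) (min r1 r2) / 2"
  have e: "0 < e" "e \<le> s1" "e \<le> t2" "2*e \<le> r1" "2*e \<le> r2" using s1 r2 by (auto simp: e_def)
  define \<alpha> where "\<alpha> = ?A - \<delta>/2"
  define \<beta> where "\<beta> = ?A1 + \<delta>"
  have A1: "0 \<le> ?A1" "0 \<le> ?A2" using ang_nonneg[OF H] y z w by auto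
  have Api: "?A \<le> pi" using ang_le_pi[OF H y z] .
  have A3: "?A = ?A1 + ?A2 + 3 * \<delta>" unfolding \<delta>_def by (simp add: field_simps)
  have ab: "0 < \<beta>" "\<beta> < \<alpha>" "\<alpha> < pi" using A1 \<delta> Api A3 unfolding \<alpha>_def \<beta>_def by linarith+
  obtain \<rho> r where rho: "0 < \<rho>" "\<rho> \<le> 2*e" "0 < r" "r < 1"
     and eq1: "e\<^sup>2 + \<rho>\<^sup>2 - 2 * e * \<rho> * cos \<beta> = r\<^sup>2 * (2 * e\<^sup>2 * (1 - cos \<alpha>))"
     and eq2: "\<rho>\<^sup>2 + e\<^sup>2 - 2 * \<rho> * e * cos (\<alpha> - \<beta>) = (1 - r)\<^sup>2 * (2 * e\<^sup>2 * (1 - cos \<alpha>))"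
    using plane_lemma[OF e(1) ab] by blast
  define L where "L = sqrt (2 * e\<^sup>2 * (1 - cos \<alpha>))"
  have L0: "0 \<le> 2 * e\<^sup>2 * (1 - cos \<alpha>)" by simp
  have LL: "L\<^sup>2 = 2 * e\<^sup>2 * (1 - cos \<alpha>)" "L \<ge> 0" unfolding L_def using L0 by auto
  let ?p = "geod x y e" and ?q = "geod x w \<rho>" and ?o = "geod x z e"
  have dp: "dist x ?p = e" by (rule geod_dist[OF H]) (use e s1 in auto)
  have dq: "dist x ?q = \<rho>" by (rule geod_dist[OF H]) (use e rho s1 in auto)
  have do: "dist x ?o = e" by (rule geod_dist[OF H]) (use e r2 in auto)
  have np: "?p \<noteq> x" and nq: "?q \<noteq> x" and no: "?o \<noteq> x" using dp dq do e rho by auto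
  have c1: "cf x y w e \<rho> < \<beta>" using b1[of e \<rho>] e rho by (simp add: \<beta>_def)
  have c1r: "0 \<le> cf x y w e \<rho>" "cf x y w e \<rho> \<le> pi" using cf_range[OF H, of e x y \<rho> w] e rho s1 by auto
  have "cos \<beta> < cos (cf x y w e \<rho>)" using c1 c1r ab by (subst cos_mono_less_eq) auto
  then have "2 * e * \<rho> * cos \<beta> < 2 * e * \<rho> * cos (cf x y w e \<rho>)" using e rho by simp
  then have "(dist ?p ?q)\<^sup>2 < (r * L)\<^sup>2"
    using cos_cangle[OF np nq] dp dq eq1 LL by (simp add: cf_def power_mult_distrib)
  moreover have "0 \<le> r * L" using rho LL(2) by simp
  ultimately have d1: "dist ?p ?q < r * L" by (rule power2_less_imp_less)
  have c2: "cf x w z \<rho> e < \<alpha> - \<beta>" using b2[of \<rho> e] e rho A3 \<delta> unfolding \<alpha>_def \<beta>_def by auto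
  have c2r: "0 \<le> cf x w z \<rho> e" "cf x w z \<rho> e \<le> pi" using cf_range[OF H, of \<rho> x w e z] e rho r2 by auto
  have "cos (\<alpha> - \<beta>) < cos (cf x w z \<rho> e)" using c2 c2r ab by (subst cos_mono_less_eq) auto
  then have "2 * \<rho> * e * cos (\<alpha> - \<beta>) < 2 * \<rho> * e * cos (cf x w z \<rho> e)" using e rho by simp
  then have "(dist ?q ?o)\<^sup>2 < ((1 - r) * L)\<^sup>2"
    using cos_cangle[OF nq no] dq do eq2 LL by (simp add: cf_def power_mult_distrib)
  moreover have "0 \<le> (1 - r) * L" using rho LL(2) by simp
  ultimately have d2: "dist ?q ?o < (1 - r) * L" by (rule power2_less_imp_less)
  have "dist ?p ?o \<le> dist ?p ?q + dist ?q ?o" by (rule dist_triangle)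
  also have "\<dots> < r * L + (1 - r) * L" using d1 d2 by simp
  also have "\<dots> = L" by (simp add: algebra_simps)
  finally have up: "dist ?p ?o < L" .
  have th: "?A \<le> cf x y z e e" by (rule ang_le_cf[OF H]) (use e s1 r2 in auto)
  have thr: "cf x y z e e \<le> pi" using cf_range[OF H, of e x y e z] e s1 r2 by auto
  have "cos (cf x y z e e) \<le> cos \<alpha>" using th thr ab by (subst cos_mono_le_eq) (use \<delta> A1 A3 in \<open>auto simp: \<alpha>_def\<close>)
  then have "2 * e * e * cos (cf x y z e e) \<le> 2 * e * e * cos \<alpha>" using e by simp
  then have "L\<^sup>2 \<le> (dist ?p ?o)\<^sup>2"
    using cos_cangle[OF np no] dp do LL by (simp add: cf_def power2_eq_square algebra_simps)
  then have "L \<le> dist ?p ?o" by (rule power2_le_imp_le) simp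
  then show False using up by simp
qed

lemma dir_seq_const:
  fixes x a :: "'a::complete_space"
  assumes H: "hadamard_space TYPE('a)" and a: "a \<noteq> x"
  shows "dir_seq x (\<lambda>_. a)"
  unfolding dir_seq_def using ang_self[OF H a] a by auto

lemma dir_seq_ne: "dir_seq x \<sigma> \<Longrightarrow> \<sigma> k \<noteq> x"
  unfolding dir_seq_def by auto

lemma ang4:
  fixes x a b c d :: "'a::complete_space"
  assumes H: "hadamard_space TYPE('a)" and ne: "a \<noteq> x" "b \<noteq> x" "c \<noteq> x" "d \<noteq> x"
  shows "\<bar>alex_angle x a b - alex_angle x c d\<bar> \<le> alex_angle x a c + alex_angle x b d"
proof -
  have "alex_angle x a b \<le> alex_angle x a c + alex_angle x c b" using ang_tri[OF H] ne by blast
  also have "alex_angle x c b \<le> alex_angle x c d + alex_angle x d b" using ang_tri[OF H] ne by blast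
  finally have 1: "alex_angle x a b \<le> alex_angle x a c + alex_angle x c d + alex_angle x b d"
    using ang_sym[OF H, of d x b] ne by simp
  have "alex_angle x c d \<le> alex_angle x c a + alex_angle x a d" using ang_tri[OF H] ne by blast
  also have "alex_angle x a d \<le> alex_angle x a b + alex_angle x b d" using ang_tri[OF H] ne by blast
  finally have 2: "alex_angle x c d \<le> alex_angle x a c + alex_angle x a b + alex_angle x b d"
    using ang_sym[OF H, of c x a] ne by simp
  show ?thesis using 1 2 by linarith
qed

lemma dir_angle_lim:
  fixes x :: "'a::complete_space"
  assumes H: "hadamard_space TYPE('a)" and s: "dir_seq x \<sigma>" and t: "dir_seq x \<tau>"
  shows "(\<lambda>k. alex_angle x (\<sigma> k) (\<tau> k)) \<longlonglongrightarrow> dir_angle x \<sigma> \<tau>"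
    "0 \<le> dir_angle x \<sigma> \<tau>" "dir_angle x \<sigma> \<tau> \<le> pi"
proof -
  let ?X = "\<lambda>k. alex_angle x (\<sigma> k) (\<tau> k)"
  have "Cauchy ?X"
  proof (rule metric_CauchyI)
    fix e :: real assume e: "e > 0"
    obtain N1 where N1: "\<And>m n. m \<ge> N1 \<Longrightarrow> n \<ge> N1 \<Longrightarrow> alex_angle x (\<sigma> m) (\<sigma> n) < e/2"
      using s e unfolding dir_seq_def by (meson half_gt_zero)
    obtain N2 where N2: "\<And>m n. m \<ge> N2 \<Longrightarrow> n \<ge> N2 \<Longrightarrow> alex_angle x (\<tau> m) (\<tau> n) < e/2"
      using t e unfolding dir_seq_def by (meson half_gt_zero)
    show "\<exists>M. \<forall>m\<ge>M. \<forall>n\<ge>M. dist (?X m) (?X n) < e"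
    proof (intro exI allI impI)
      fix m n assume "m \<ge> max N1 N2" "n \<ge> max N1 N2"
      then have "alex_angle x (\<sigma> m) (\<sigma> n) < e/2" "alex_angle x (\<tau> m) (\<tau> n) < e/2"
        using N1 N2 by auto
      moreover have "\<bar>?X m - ?X n\<bar> \<le> alex_angle x (\<sigma> m) (\<sigma> n) + alex_angle x (\<tau> m) (\<tau> n)"
        by (rule ang4[OF H]) (use s t dir_seq_ne in auto)
      ultimately show "dist (?X m) (?X n) < e" by (simp add: dist_real_def)
    qed
  qed
  then have "convergent ?X" by (simp add: Cauchy_convergent_iff)
  then show lim: "?X \<longlonglongrightarrow> dir_angle x \<sigma> \<tau>" unfolding dir_angle_def by (simp add: convergent_LIMSEQ_iff)
  show "0 \<le> dir_angle x \<sigma> \<tau>"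
    by (rule LIMSEQ_le_const[OF lim]) (use ang_nonneg[OF H] s t dir_seq_ne in blast)
  show "dir_angle x \<sigma> \<tau> \<le> pi"
    by (rule LIMSEQ_le_const2[OF lim]) (use ang_le_pi[OF H] s t dir_seq_ne in blast)
qed

lemma dir_angle_const:
  fixes x a b :: "'a::complete_space"
  shows "dir_angle x (\<lambda>_. a) (\<lambda>_. b) = alex_angle x a b"
  unfolding dir_angle_def by simp

lemma tangent_fst: "u \<in> tangent x \<Longrightarrow> fst u \<ge> 0"
  unfolding tangent_def by auto

lemma tangent_dir: "u \<in> tangent x \<Longrightarrow> fst u > 0 \<Longrightarrow> dir_seq x (snd u)"
  unfolding tangent_def by auto

lemma tlog_tangent:
  fixes x a :: "'a::complete_space"
  assumes H: "hadamard_space TYPE('a)"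
  shows "tlog x a \<in> tangent x"
  unfolding tlog_def tangent_def tzero_def using dir_seq_const[OF H, of a x] by auto

lemma tzero_tangent: "tzero x \<in> tangent x"
  unfolding tzero_def tangent_def by auto

lemma tscale_tangent: "u \<in> tangent x \<Longrightarrow> c > 0 \<Longrightarrow> tscale c u \<in> tangent x"
  unfolding tscale_def tangent_def by auto

lemma fst_tlog: "fst (tlog x a) = dist x a"
  unfolding tlog_def tzero_def by auto

lemma tinner_tzero2: "tinner x u (tzero x) = 0" unfolding tinner_def tzero_def by simp
lemma tinner_fst0: "fst u = 0 \<Longrightarrow> tinner x u v = 0" unfolding tinner_def by simp
lemma tinner_fst0': "fst v = 0 \<Longrightarrow> tinner x u v = 0" unfolding tinner_def by simp

lemma tdist_tzero: "tdist x u (tzero x) = \<bar>fst u\<bar>"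
  unfolding tdist_def tinner_tzero2 by (simp add: tzero_def)

lemma tinner_abs:
  assumes "fst u \<ge> 0" "fst v \<ge> 0"
  shows "\<bar>tinner x u v\<bar> \<le> fst u * fst v"
proof -
  have "\<bar>tinner x u v\<bar> = fst u * fst v * \<bar>cos (dir_angle x (snd u) (snd v))\<bar>"
    unfolding tinner_def using assms by (simp add: abs_mult)
  also have "\<dots> \<le> fst u * fst v * 1" using assms abs_cos_le_one by (intro mult_left_mono) auto
  finally show ?thesis by simp
qed

lemma tinner_via_tdist:
  assumes "fst u \<ge> 0" "fst v \<ge> 0"
  shows "tinner x u v = ((fst u)\<^sup>2 + (fst v)\<^sup>2 - (tdist x u v)\<^sup>2) / 2"
proof -
  have "tinner x u v \<le> fst u * fst v" using tinner_abs[OF assms, of x] by linarith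
  then have "0 \<le> (fst u - fst v)\<^sup>2 + 2 * (fst u * fst v - tinner x u v)" by simp
  then have "0 \<le> (fst u)\<^sup>2 + (fst v)\<^sup>2 - 2 * tinner x u v" by (simp add: power2_diff algebra_simps)
  then have "(tdist x u v)\<^sup>2 = (fst u)\<^sup>2 + (fst v)\<^sup>2 - 2 * tinner x u v" unfolding tdist_def by simp
  then show ?thesis by simp
qed

lemma tinner_tlog:
  fixes x a :: "'a::complete_space"
  assumes "a \<noteq> x"
  shows "tinner x u (tlog x a) = fst u * dist x a * cos (dir_angle x (snd u) (\<lambda>_. a))"
  unfolding tinner_def tlog_def using assms by simp

lemma tinner_cong:
  fixes x a :: "'a::complete_space"
  assumes H: "hadamard_space TYPE('a)" and u: "u \<in> tangent x" and v: "v \<in> tangent x"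
    and d: "tdist x u v = 0"
  shows "tinner x u (tlog x a) = tinner x v (tlog x a)"
proof (cases "a = x")
  case True
  then show ?thesis unfolding tlog_def by (simp add: tinner_tzero2)
next
  case a: False
  have u0: "fst u \<ge> 0" and v0: "fst v \<ge> 0" using tangent_fst[OF u] tangent_fst[OF v] by auto
  have eq: "(fst u)\<^sup>2 + (fst v)\<^sup>2 - 2 * tinner x u v = 0"
    using tinner_via_tdist[OF u0 v0, of x] d by simp
  show ?thesis
  proof (cases "fst u = 0 \<or> fst v = 0")
    case True
    then have "fst u = 0 \<and> fst v = 0" using eq tinner_fst0[of u x v] tinner_fst0'[of v x u] by auto
    then show ?thesis by (simp add: tinner_fst0)
  next
    case False
    then have up: "fst u > 0" and vp: "fst v > 0" using u0 v0 by auto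
    have su: "dir_seq x (snd u)" and sv: "dir_seq x (snd v)" using tangent_dir[OF u up] tangent_dir[OF v vp] by auto
    let ?th = "dir_angle x (snd u) (snd v)"
    have th: "0 \<le> ?th" "?th \<le> pi" using dir_angle_lim[OF H su sv] by auto
    have eq2: "(fst u - fst v)\<^sup>2 + 2 * (fst u * fst v) * (1 - cos ?th) = 0"
      using eq unfolding tinner_def by (simp add: power2_diff algebra_simps)
    have nn: "0 \<le> 2 * (fst u * fst v) * (1 - cos ?th)" using up vp cos_le_one[of ?th] by simp
    have "(fst u - fst v)\<^sup>2 = 0" "2 * (fst u * fst v) * (1 - cos ?th) = 0"
      using eq2 nn by (smt (verit) zero_le_power2)+
    then have fe: "fst u = fst v" and c1: "cos ?th = 1" using up vp by auto
    have th0: "?th = 0" using cos_inj_pi[of ?th 0] th c1 by simp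
    have ca: "dir_seq x (\<lambda>_. a)" using dir_seq_const[OF H a] .
    let ?L1 = "dir_angle x (snd u) (\<lambda>_. a)" and ?L2 = "dir_angle x (snd v) (\<lambda>_. a)"
    have l1: "(\<lambda>k. alex_angle x (snd u k) a) \<longlonglongrightarrow> ?L1" using dir_angle_lim(1)[OF H su ca] by simp
    have l2: "(\<lambda>k. alex_angle x (snd v k) a) \<longlonglongrightarrow> ?L2" using dir_angle_lim(1)[OF H sv ca] by simp
    have l3: "(\<lambda>k. alex_angle x (snd u k) (snd v k)) \<longlonglongrightarrow> 0" using dir_angle_lim(1)[OF H su sv] th0 by simp
    have "(\<lambda>k. \<bar>alex_angle x (snd u k) a - alex_angle x (snd v k) a\<bar>) \<longlonglongrightarrow> \<bar>?L1 - ?L2\<bar>"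
      by (intro tendsto_intros l1 l2)
    moreover have "\<bar>alex_angle x (snd u k) a - alex_angle x (snd v k) a\<bar> \<le> alex_angle x (snd u k) (snd v k)" for k
    proof -
      have "\<bar>alex_angle x (snd u k) a - alex_angle x (snd v k) a\<bar> \<le> alex_angle x (snd u k) (snd v k) + alex_angle x a a"
        by (rule ang4[OF H]) (use a su sv dir_seq_ne in auto)
      then show ?thesis using ang_self[OF H a] by simp
    qed
    ultimately have "\<bar>?L1 - ?L2\<bar> \<le> 0" using l3 by (intro LIMSEQ_le) auto
    then have "?L1 = ?L2" by simp
    then show ?thesis unfolding tinner_tlog[OF a] fe by simp
  qed
qed



lemma tlog_self: "tlog x x = tzero x" unfolding tlog_def by simp

lemma trig_id:
  fixes A B a b :: real
  shows "(A * cos a - B * cos b)\<^sup>2 + (A * sin a - B * sin b)\<^sup>2 = A\<^sup>2 + B\<^sup>2 - 2 * A * B * cos (a - b)"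
proof -
  have "(A * cos a - B * cos b)\<^sup>2 + (A * sin a - B * sin b)\<^sup>2
      = A\<^sup>2 * ((sin a)\<^sup>2 + (cos a)\<^sup>2) + B\<^sup>2 * ((sin b)\<^sup>2 + (cos b)\<^sup>2) - 2 * A * B * (cos a * cos b + sin a * sin b)"
    by algebra
  then show ?thesis by (simp add: cos_diff)
qed

lemma tinner_lip:
  fixes x a b :: "'a::complete_space"
  assumes H: "hadamard_space TYPE('a)" and u: "u \<in> tangent x"
  shows "\<bar>tinner x u (tlog x a) - tinner x u (tlog x b)\<bar> \<le> fst u * dist a b"
proof -
  have u0: "fst u \<ge> 0" using tangent_fst[OF u] .
  have bound: "\<bar>tinner x u (tlog x c)\<bar> \<le> fst u * dist x c" for c
    using tinner_abs[OF u0, of "tlog x c" x] by (simp add: fst_tlog)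
  show ?thesis
  proof (cases "fst u = 0")
    case True then show ?thesis by (simp add: tinner_fst0)
  next
    case False
    then have up: "fst u > 0" using u0 by simp
    have su: "dir_seq x (snd u)" using tangent_dir[OF u up] .
    show ?thesis
    proof (cases "a = x \<or> b = x")
      case True
      then show ?thesis
      proof
        assume "a = x" then show ?thesis using bound[of b] by (simp add: tlog_self tinner_tzero2)
      next
        assume "b = x" then show ?thesis using bound[of a] by (simp add: tlog_self tinner_tzero2 dist_commute)
      qed
    next
      case False
      then have a: "a \<noteq> x" and b: "b \<noteq> x" by auto
      let ?al = "dir_angle x (snd u) (\<lambda>_. a)" and ?be = "dir_angle x (snd u) (\<lambda>_. b)"
      let ?c = "alex_angle x a b"
      have ca: "dir_seq x (\<lambda>_. a)" and cb: "dir_seq x (\<lambda>_. b)" using dir_seq_const[OF H] a b by auto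
      have la: "(\<lambda>k. alex_angle x (snd u k) a) \<longlonglongrightarrow> ?al" "0 \<le> ?al" "?al \<le> pi"
        using dir_angle_lim[OF H su ca] by auto
      have lb: "(\<lambda>k. alex_angle x (snd u k) b) \<longlonglongrightarrow> ?be" "0 \<le> ?be" "?be \<le> pi"
        using dir_angle_lim[OF H su cb] by auto
      have "(\<lambda>k. \<bar>alex_angle x (snd u k) a - alex_angle x (snd u k) b\<bar>) \<longlonglongrightarrow> \<bar>?al - ?be\<bar>"
        by (intro tendsto_intros la lb)
      moreover have "\<bar>alex_angle x (snd u k) a - alex_angle x (snd u k) b\<bar> \<le> ?c" for k
      proof -
        have ne: "snd u k \<noteq> x" using dir_seq_ne[OF su] .
        have "\<bar>alex_angle x (snd u k) a - alex_angle x (snd u k) b\<bar> \<le> alex_angle x (snd u k) (snd u k) + ?c"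
          by (rule ang4[OF H ne a ne b])
        then show ?thesis using ang_self[OF H ne] by simp
      qed
      ultimately have abc: "\<bar>?al - ?be\<bar> \<le> ?c" by (intro LIMSEQ_le_const2) auto
      have c: "0 \<le> ?c" "?c \<le> pi" using ang_nonneg[OF H a b] ang_le_pi[OF H a b] by auto
      have "cos ?c \<le> cos \<bar>?al - ?be\<bar>" using abc c la lb by (subst cos_mono_le_eq) auto
      then have cc: "cos ?c \<le> cos (?al - ?be)" by simp
      let ?A = "dist x a" and ?B = "dist x b"
      have "(dist a b)\<^sup>2 \<ge> ?A\<^sup>2 + ?B\<^sup>2 - 2 * ?A * ?B * cos ?c" by (rule cos_law[OF H a b])
      moreover have "2 * ?A * ?B * cos ?c \<le> 2 * ?A * ?B * cos (?al - ?be)" using cc by (intro mult_left_mono) auto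
      moreover have "?A\<^sup>2 + ?B\<^sup>2 - 2 * ?A * ?B * cos (?al - ?be)
           = (?A * cos ?al - ?B * cos ?be)\<^sup>2 + (?A * sin ?al - ?B * sin ?be)\<^sup>2"
        by (rule trig_id[symmetric])
      ultimately have "(?A * cos ?al - ?B * cos ?be)\<^sup>2 \<le> (dist a b)\<^sup>2"
        by (smt (verit) zero_le_power2)
      then have le: "\<bar>?A * cos ?al - ?B * cos ?be\<bar> \<le> dist a b"
        by (metis abs_le_square_iff abs_of_nonneg zero_le_dist)
      have "tinner x u (tlog x a) - tinner x u (tlog x b) = fst u * (?A * cos ?al - ?B * cos ?be)"
        unfolding tinner_tlog[OF a] tinner_tlog[OF b] by (simp add: algebra_simps)
      then show ?thesis using le up by (simp add: abs_mult mult_left_mono)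
    qed
  qed
qed

lemma tinner_Q:
  fixes z x y :: "'a::complete_space"
  assumes H: "hadamard_space TYPE('a)" and c: "c \<ge> 0"
  shows "c * ((dist z x)\<^sup>2 + (dist z y)\<^sup>2 - (dist x y)\<^sup>2) / 2 \<le> tinner z (tscale c (tlog z x)) (tlog z y)"
proof (cases "x = z \<or> y = z")
  case True
  then show ?thesis
  proof
    assume "x = z" then show ?thesis by (simp add: tlog_self tscale_def tzero_def tinner_def dist_commute)
  next
    assume "y = z" then show ?thesis by (simp add: tlog_self tinner_tzero2 dist_commute)
  qed
next
  case False
  then have x: "x \<noteq> z" and y: "y \<noteq> z" by auto
  have eq: "tinner z (tscale c (tlog z x)) (tlog z y) = c * (dist z x * dist z y * cos (alex_angle z x y))"
    unfolding tinner_tlog[OF y] using x by (simp add: tscale_def tlog_def dir_angle_const)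
  have "(dist x y)\<^sup>2 \<ge> (dist z x)\<^sup>2 + (dist z y)\<^sup>2 - 2 * dist z x * dist z y * cos (alex_angle z x y)"
    by (rule cos_law[OF H x y])
  then have "((dist z x)\<^sup>2 + (dist z y)\<^sup>2 - (dist x y)\<^sup>2) / 2 \<le> dist z x * dist z y * cos (alex_angle z x y)"
    by simp
  then have "c * (((dist z x)\<^sup>2 + (dist z y)\<^sup>2 - (dist x y)\<^sup>2) / 2) \<le> c * (dist z x * dist z y * cos (alex_angle z x y))"
    by (rule mult_left_mono[OF _ c])
  then show ?thesis unfolding eq by simp
qed

lemma resolvent_ineq:
  fixes x1 x2 z1 z2 :: "'a::complete_space"
  assumes H: "hadamard_space TYPE('a)" and tan: "\<And>z. B z \<subseteq> tangent z" and mono: "vf_monotone B"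
    and lam: "lam > 0" and r1: "is_resolvent B lam x1 z1" and r2: "is_resolvent B lam x2 z2"
  shows "2 * (dist z1 z2)\<^sup>2 \<le> (dist x1 z2)\<^sup>2 - (dist z1 x1)\<^sup>2 + (dist x2 z1)\<^sup>2 - (dist z2 x2)\<^sup>2"
proof -
  let ?u1 = "tscale (1/lam) (tlog z1 x1)" and ?u2 = "tscale (1/lam) (tlog z2 x2)"
  obtain v1 where v1: "v1 \<in> B z1" "tdist z1 ?u1 v1 = 0" using r1 unfolding is_resolvent_def tmem_def by blast
  obtain v2 where v2: "v2 \<in> B z2" "tdist z2 ?u2 v2 = 0" using r2 unfolding is_resolvent_def tmem_def by blast
  have u1t: "?u1 \<in> tangent z1" and u2t: "?u2 \<in> tangent z2"
    using tscale_tangent[OF tlog_tangent[OF H]] lam by auto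
  have v1t: "v1 \<in> tangent z1" and v2t: "v2 \<in> tangent z2" using tan v1 v2 by auto
  have m: "tinner z1 v1 (tlog z1 z2) \<le> - tinner z2 v2 (tlog z2 z1)"
    using mono v1 v2 unfolding vf_monotone_def by blast
  have e1: "tinner z1 ?u1 (tlog z1 z2) = tinner z1 v1 (tlog z1 z2)" by (rule tinner_cong[OF H u1t v1t v1(2)])
  have e2: "tinner z2 ?u2 (tlog z2 z1) = tinner z2 v2 (tlog z2 z1)" by (rule tinner_cong[OF H u2t v2t v2(2)])
  have q1: "(1/lam) * ((dist z1 x1)\<^sup>2 + (dist z1 z2)\<^sup>2 - (dist x1 z2)\<^sup>2) / 2 \<le> tinner z1 ?u1 (tlog z1 z2)"
    by (rule tinner_Q[OF H]) (use lam in simp)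
  have q2: "(1/lam) * ((dist z2 x2)\<^sup>2 + (dist z2 z1)\<^sup>2 - (dist x2 z1)\<^sup>2) / 2 \<le> tinner z2 ?u2 (tlog z2 z1)"
    by (rule tinner_Q[OF H]) (use lam in simp)
  have "(1/lam) * ((dist z1 x1)\<^sup>2 + (dist z1 z2)\<^sup>2 - (dist x1 z2)\<^sup>2) / 2
      + (1/lam) * ((dist z2 x2)\<^sup>2 + (dist z2 z1)\<^sup>2 - (dist x2 z1)\<^sup>2) / 2 \<le> 0"
    using q1 q2 e1 e2 m by linarith
  then have "(1/lam) * (((dist z1 x1)\<^sup>2 + (dist z1 z2)\<^sup>2 - (dist x1 z2)\<^sup>2)
      + ((dist z2 x2)\<^sup>2 + (dist z2 z1)\<^sup>2 - (dist x2 z1)\<^sup>2)) \<le> 0"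
    by (simp add: algebra_simps add_divide_distrib[symmetric])
  then have "((dist z1 x1)\<^sup>2 + (dist z1 z2)\<^sup>2 - (dist x1 z2)\<^sup>2)
      + ((dist z2 x2)\<^sup>2 + (dist z2 z1)\<^sup>2 - (dist x2 z1)\<^sup>2) \<le> 0"
    using lam by (simp add: divide_le_0_iff)
  then show ?thesis by (simp add: dist_commute)
qed

lemma resolvent_unique:
  fixes x z1 z2 :: "'a::complete_space"
  assumes H: "hadamard_space TYPE('a)" and tan: "\<And>z. B z \<subseteq> tangent z" and mono: "vf_monotone B"
    and lam: "lam > 0" and r1: "is_resolvent B lam x z1" and r2: "is_resolvent B lam x z2"
  shows "z1 = z2"
  using resolvent_ineq[OF H tan mono lam r1 r2] by (simp add: dist_commute)

lemma resolvent_ok: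
  fixes x :: "'a::complete_space"
  assumes H: "hadamard_space TYPE('a)" and tan: "\<And>z. B z \<subseteq> tangent z" and mono: "vf_monotone B"
    and surj: "surjectivity_cond B" and lam: "lam > 0"
  shows "is_resolvent B lam x (resolvent B lam x)"
proof -
  obtain z where z: "is_resolvent B lam x z" using surj lam unfolding surjectivity_cond_def by blast
  have "\<exists>!z. is_resolvent B lam x z" using z resolvent_unique[OF H tan mono lam] by blast
  then show ?thesis unfolding resolvent_def by (rule theI')
qed

lemma resolvent_cont:
  fixes y :: "nat \<Rightarrow> 'a::complete_space"
  assumes H: "hadamard_space TYPE('a)" and tan: "\<And>z. B z \<subseteq> tangent z" and mono: "vf_monotone B"
    and surj: "surjectivity_cond B" and lam: "lam > 0" and lim: "y \<longlonglongrightarrow> y0"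
  shows "(\<lambda>k. resolvent B lam (y k)) \<longlonglongrightarrow> resolvent B lam y0"
proof -
  let ?J = "resolvent B lam"
  have bnd: "dist (?J x2) (?J x1) \<le> sqrt (6 * (dist x2 x1)\<^sup>2 + 4 * dist x1 (?J x1) * dist x2 x1)" for x1 x2
  proof -
    let ?z1 = "?J x1" and ?z2 = "?J x2"
    define D where "D = dist x1 x2"
    define R where "R = dist x1 ?z1"
    define \<zeta> where "\<zeta> = dist ?z1 ?z2"
    have D0: "D \<ge> 0" and R0: "R \<ge> 0" and z0: "\<zeta> \<ge> 0" by (auto simp: D_def R_def \<zeta>_def)
    have main: "2 * \<zeta>\<^sup>2 \<le> (dist x1 ?z2)\<^sup>2 - (dist ?z1 x1)\<^sup>2 + (dist x2 ?z1)\<^sup>2 - (dist ?z2 x2)\<^sup>2"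
      unfolding \<zeta>_def by (rule resolvent_ineq[OF H tan mono lam resolvent_ok[OF H tan mono surj lam] resolvent_ok[OF H tan mono surj lam]])
    have sq: "a\<^sup>2 - b\<^sup>2 \<le> D * (a + b)" if "a - b \<le> D" "a \<ge> 0" "b \<ge> 0" for a b
    proof -
      have "a\<^sup>2 - b\<^sup>2 = (a - b) * (a + b)" by (simp add: power2_eq_square algebra_simps)
      also have "\<dots> \<le> D * (a + b)" using that by (intro mult_right_mono) auto
      finally show ?thesis .
    qed
    have t1: "dist x1 ?z2 \<le> R + \<zeta>" unfolding R_def \<zeta>_def by (rule dist_triangle)
    have t2: "dist x1 ?z2 - dist x2 ?z2 \<le> D" unfolding D_def using dist_triangle[of x1 ?z2 x2] by simp
    have t3: "dist x2 ?z2 \<le> D + R + \<zeta>" unfolding D_def R_def \<zeta>_def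
      using dist_triangle[of x2 ?z2 x1] dist_triangle[of x1 ?z2 ?z1] by (simp add: dist_commute)
    have t4: "dist x2 ?z1 - dist x1 ?z1 \<le> D" unfolding D_def using dist_triangle[of x2 ?z1 x1] by (simp add: dist_commute)
    have t5: "dist x2 ?z1 \<le> D + R" unfolding D_def R_def using dist_triangle[of x2 ?z1 x1] by (simp add: dist_commute)
    have a1: "(dist x1 ?z2)\<^sup>2 - (dist x2 ?z2)\<^sup>2 \<le> D * (dist x1 ?z2 + dist x2 ?z2)" by (rule sq[OF t2]) auto
    have a2: "(dist x2 ?z1)\<^sup>2 - (dist x1 ?z1)\<^sup>2 \<le> D * (dist x2 ?z1 + dist x1 ?z1)" by (rule sq[OF t4]) auto
    have "D * (dist x1 ?z2 + dist x2 ?z2) \<le> D * ((R + \<zeta>) + (D + R + \<zeta>))" using t1 t3 D0 by (intro mult_left_mono) auto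
    moreover have "D * (dist x2 ?z1 + dist x1 ?z1) \<le> D * ((D + R) + R)" using t5 D0 unfolding R_def by (intro mult_left_mono) auto
    ultimately have "2 * \<zeta>\<^sup>2 \<le> D * ((R + \<zeta>) + (D + R + \<zeta>)) + D * ((D + R) + R)"
      using main a1 a2 by (simp add: dist_commute)
    then have key: "\<zeta>\<^sup>2 \<le> D * \<zeta> + D * (2 * R + D)" by (simp add: algebra_simps)
    have "\<zeta>\<^sup>2 \<le> 6 * D\<^sup>2 + 4 * R * D"
    proof (cases "\<zeta> \<le> 2 * D")
      case True
      then have "\<zeta>\<^sup>2 \<le> (2 * D)\<^sup>2" using z0 by (intro power_mono) auto
      moreover have "0 \<le> 2 * D\<^sup>2 + 4 * R * D" using D0 R0 by (intro add_nonneg_nonneg) auto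
      moreover have "(2 * D)\<^sup>2 = 4 * D\<^sup>2" by (simp add: power_mult_distrib)
      ultimately show ?thesis by linarith
    next
      case False
      then have "D * \<zeta> \<le> \<zeta>\<^sup>2 / 2" using z0 D0 by (simp add: power2_eq_square mult_right_mono)
      then have h: "2 * (D * \<zeta>) \<le> \<zeta> * \<zeta>" by (simp add: power2_eq_square)
      have key2: "\<zeta> * \<zeta> \<le> D * \<zeta> + 2 * (D * R) + D * D" using key by (simp add: power2_eq_square algebra_simps)
      have "0 \<le> D * D" using D0 by simp
      then have "\<zeta> * \<zeta> \<le> 6 * (D * D) + 4 * (D * R)" using h key2 by linarith
      then show ?thesis by (simp add: power2_eq_square algebra_simps)
    qed
    then have "\<zeta> \<le> sqrt (6 * D\<^sup>2 + 4 * R * D)" by (rule real_le_rsqrt)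
    then show ?thesis unfolding \<zeta>_def D_def R_def by (simp add: dist_commute)
  qed
  let ?c = "dist y0 (?J y0)"
  have d: "(\<lambda>k. dist (y k) y0) \<longlonglongrightarrow> 0" using lim by (rule tendsto_dist_iff[THEN iffD1])
  have "(\<lambda>k. 6 * (dist (y k) y0)\<^sup>2 + 4 * ?c * dist (y k) y0) \<longlonglongrightarrow> 6 * 0\<^sup>2 + 4 * ?c * 0"
    using lim by (auto intro!: tendsto_eq_intros)
  then have "(\<lambda>k. sqrt (6 * (dist (y k) y0)\<^sup>2 + 4 * ?c * dist (y k) y0)) \<longlonglongrightarrow> sqrt (6 * 0\<^sup>2 + 4 * ?c * 0)"
    by (rule tendsto_real_sqrt)
  then have S: "(\<lambda>k. sqrt (6 * (dist (y k) y0)\<^sup>2 + 4 * ?c * dist (y k) y0)) \<longlonglongrightarrow> 0" by simp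
  have "(\<lambda>k. dist (?J (y k)) (?J y0)) \<longlonglongrightarrow> 0"
  proof (rule tendsto_sandwich[OF _ _ tendsto_const S])
    show "\<forall>\<^sub>F k in sequentially. 0 \<le> dist (?J (y k)) (?J y0)" by simp
    show "\<forall>\<^sub>F k in sequentially. dist (?J (y k)) (?J y0) \<le> sqrt (6 * (dist (y k) y0)\<^sup>2 + 4 * ?c * dist (y k) y0)"
      by (intro always_eventually allI bnd)
  qed
  then show ?thesis by (rule tendsto_dist_iff[THEN iffD2])
qed

lemma carath_meas:
  fixes F :: "'e \<Rightarrow> 'a::metric_space \<Rightarrow> 'b::metric_space" and \<xi> :: "'w \<Rightarrow> 'e" and Y :: "'w \<Rightarrow> 'a"
  assumes sep: "separable_space TYPE('a)"
    and Fm: "\<And>a. (\<lambda>s. F s a) \<in> borel_measurable \<mu>"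
    and Fc: "\<And>s y y0. s \<in> space \<mu> \<Longrightarrow> y \<longlonglongrightarrow> y0 \<Longrightarrow> (\<lambda>k. F s (y k)) \<longlonglongrightarrow> F s y0"
    and \<xi>: "\<xi> \<in> measurable P \<mu>" and Y: "Y \<in> borel_measurable P"
  shows "(\<lambda>\<omega>. F (\<xi> \<omega>) (Y \<omega>)) \<in> borel_measurable P"
proof -
  obtain D :: "'a set" where D: "countable D" "closure D = UNIV" using sep unfolding separable_space_def by blast
  have Dne: "D \<noteq> {}" using D(2) by auto
  define e where "e = from_nat_into D"
  have approx: "\<exists>i. dist p (e i) < r" if r: "r > 0" for p r
  proof -
    have "p \<in> closure D" using D by simp
    then obtain d where d: "d \<in> D" "dist p d < r" using closure_approachableD[OF _ r] by blast
    have "e (to_nat_on D d) = d" unfolding e_def using from_nat_into_to_nat_on[OF D(1) d(1)] .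
    then show ?thesis using d by metis
  qed
  define idx where "idx k p = (LEAST i. dist p (e i) < 1 / Suc k)" for k p
  have idx: "dist p (e (idx k p)) < 1 / Suc k" for k p
    unfolding idx_def by (rule LeastI_ex) (rule approx, simp)
  have dm: "(\<lambda>w. dist (Y w) c) \<in> borel_measurable P" for c
    by (rule borel_measurable_continuous_on[OF _ Y]) (intro continuous_intros)
  have cm: "(\<lambda>w. c) \<in> borel_measurable P" for c :: real by simp
  define G where "G k \<omega> = F (\<xi> \<omega>) (e (idx k (Y \<omega>)))" for k \<omega>
  have Gm: "G k \<in> borel_measurable P" for k
  proof -
    have im: "(\<lambda>\<omega>. idx k (Y \<omega>)) \<in> measurable P (count_space UNIV)"
      unfolding idx_def
    proof (rule measurable_Least)
      fix i
      have "{\<omega> \<in> space P. dist (Y \<omega>) (e i) < 1 / Suc k} \<in> sets P"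
        by (rule borel_measurable_less[OF dm cm])
      then have "Measurable.pred P (\<lambda>\<omega>. dist (Y \<omega>) (e i) < 1 / Suc k)" by (simp only: Measurable.pred_def)
      then show "(\<lambda>\<omega>. dist (Y \<omega>) (e i) < 1 / Suc k) \<in> measurable P (count_space UNIV)" .
    qed
    have fm: "(\<lambda>\<omega>. F (\<xi> \<omega>) (e i)) \<in> borel_measurable P" for i
      by (rule measurable_compose[OF \<xi> Fm])
    have "(\<lambda>\<omega>. (\<lambda>i \<omega>. F (\<xi> \<omega>) (e i)) (idx k (Y \<omega>)) \<omega>) \<in> borel_measurable P"
      by (rule measurable_compose_countable[of "\<lambda>i \<omega>. F (\<xi> \<omega>) (e i)", OF fm im])
    then show ?thesis unfolding G_def by simp
  qed
  show ?thesis
  proof (rule borel_measurable_LIMSEQ_metric[OF Gm])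
    fix \<omega> assume \<omega>: "\<omega> \<in> space P"
    have s: "\<xi> \<omega> \<in> space \<mu>" using measurable_space[OF \<xi> \<omega>] .
    have "(\<lambda>k. dist (e (idx k (Y \<omega>))) (Y \<omega>)) \<longlonglongrightarrow> 0"
    proof (rule tendsto_sandwich[OF _ _ tendsto_const LIMSEQ_inverse_real_of_nat])
      show "\<forall>\<^sub>F k in sequentially. 0 \<le> dist (e (idx k (Y \<omega>))) (Y \<omega>)" by simp
      show "\<forall>\<^sub>F k in sequentially. dist (e (idx k (Y \<omega>))) (Y \<omega>) \<le> inverse (real (Suc k))"
        using idx by (intro always_eventually allI) (simp add: dist_commute less_imp_le inverse_eq_divide)
    qed
    then have "(\<lambda>k. e (idx k (Y \<omega>))) \<longlonglongrightarrow> Y \<omega>" by (rule tendsto_dist_iff[THEN iffD2])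
    then show "(\<lambda>k. G k \<omega>) \<longlonglongrightarrow> F (\<xi> \<omega>) (Y \<omega>)" unfolding G_def by (rule Fc[OF s])
  qed
qed

lemma step_ineq:
  fixes x z a :: "'a::complete_space"
  assumes H: "hadamard_space TYPE('a)" and tan: "\<And>y. B y \<subseteq> tangent y" and mono: "vf_monotone B"
    and lam: "lam > 0" and r: "is_resolvent B lam x z"
    and pt: "p \<in> tangent a" and tm: "tmem a p (B a)"
  shows "(dist z a)\<^sup>2 \<le> (dist x a)\<^sup>2 - 2 * lam * tinner a p (tlog a x) + lam\<^sup>2 * (fst p)\<^sup>2"
proof -
  let ?u = "tscale (1/lam) (tlog z x)"
  obtain v where v: "v \<in> B z" "tdist z ?u v = 0" using r unfolding is_resolvent_def tmem_def by blast
  obtain w where w: "w \<in> B a" "tdist a p w = 0" using tm unfolding tmem_def by blast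
  have ut: "?u \<in> tangent z" using tscale_tangent[OF tlog_tangent[OF H]] lam by auto
  have vt: "v \<in> tangent z" and wt: "w \<in> tangent a" using tan v w by auto
  have m: "tinner z v (tlog z a) \<le> - tinner a w (tlog a z)"
    using mono v w unfolding vf_monotone_def by blast
  have e1: "tinner z ?u (tlog z a) = tinner z v (tlog z a)" by (rule tinner_cong[OF H ut vt v(2)])
  have e2: "tinner a p (tlog a z) = tinner a w (tlog a z)" by (rule tinner_cong[OF H pt wt w(2)])
  have q: "(1/lam) * ((dist z x)\<^sup>2 + (dist z a)\<^sup>2 - (dist x a)\<^sup>2) / 2 \<le> tinner z ?u (tlog z a)"
    by (rule tinner_Q[OF H]) (use lam in simp)
  have l: "\<bar>tinner a p (tlog a x) - tinner a p (tlog a z)\<bar> \<le> fst p * dist x z"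
    by (rule tinner_lip[OF H pt])
  let ?G = "tinner a p (tlog a x)" and ?N = "fst p" and ?d = "dist x z"
  have "(1/lam) * ((dist z x)\<^sup>2 + (dist z a)\<^sup>2 - (dist x a)\<^sup>2) / 2 \<le> - ?G + ?N * ?d"
    using q e1 e2 m l by linarith
  then have "lam * ((1/lam) * ((dist z x)\<^sup>2 + (dist z a)\<^sup>2 - (dist x a)\<^sup>2) / 2) \<le> lam * (- ?G + ?N * ?d)"
    using lam by (intro mult_left_mono) auto
  then have "((dist z x)\<^sup>2 + (dist z a)\<^sup>2 - (dist x a)\<^sup>2) / 2 \<le> lam * (- ?G + ?N * ?d)"
    using lam by simp
  then have h2: "(dist z x)\<^sup>2 + (dist z a)\<^sup>2 - (dist x a)\<^sup>2 \<le> 2 * (lam * (- ?G + ?N * ?d))"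
  proof -
    have hh: "X / 2 \<le> Y \<Longrightarrow> X \<le> 2 * Y" for X Y :: real by linarith
    show ?thesis by (rule hh) fact
  qed
  have h3: "2 * (lam * (- ?G + ?N * ?d)) = - 2 * lam * ?G + 2 * lam * ?N * ?d" by (simp add: algebra_simps)
  have h4: "(dist z x)\<^sup>2 = ?d\<^sup>2" by (simp add: dist_commute)
  have k: "(dist z a)\<^sup>2 \<le> (dist x a)\<^sup>2 - 2 * lam * ?G + (2 * lam * ?N * ?d - ?d\<^sup>2)"
    using h2 h3 h4 by linarith
  have "2 * lam * ?N * ?d - ?d\<^sup>2 \<le> lam\<^sup>2 * ?N\<^sup>2"
  proof -
    have "0 \<le> (lam * ?N - ?d)\<^sup>2" by simp
    then show ?thesis by (simp add: power2_diff power_mult_distrib algebra_simps)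
  qed
  then show ?thesis using k by linarith
qed

theorem mainTheorem6:
  fixes \<mu> :: "'e measure" and P :: "'w measure"
    and A :: "'e \<Rightarrow> 'a::complete_space \<Rightarrow> 'a tvec set"
    and lam :: "nat \<Rightarrow> real" and \<xi> :: "nat \<Rightarrow> 'w \<Rightarrow> 'e" and x0 :: 'a
    and \<alpha> :: "'e \<Rightarrow> real" and xstar :: 'a and \<phi>star :: "'e \<Rightarrow> 'a tvec"
  assumes hadamard: "hadamard_space TYPE('a)"
    and sep: "separable_space TYPE('a)"
    and tsep: "\<And>x::'a. tangent_separable x"
    and probE: "prob_space \<mu>" and probO: "prob_space P"
    and rmvf: "random_monotone_vf \<mu> A"
    \<comment> \<open>(A0)\<close>
    and lam_pos: "\<And>n. lam n > 0"
    and lam_sq: "summable (\<lambda>n. (lam n)\<^sup>2)"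
    and lam_div: "\<not> summable lam"
    and xi_meas: "\<And>n. \<xi> (Suc n) \<in> measurable P \<mu>"
    and xi_indep: "prob_space.indep_vars P (\<lambda>_. \<mu>) (\<lambda>n. \<xi> (Suc n)) UNIV"
    and xi_distr: "\<And>n. distr P \<mu> (\<xi> (Suc n)) = \<mu>"
    \<comment> \<open>(A1)\<close>
    and alpha_meas: "\<alpha> \<in> borel_measurable \<mu>"
    and alpha_range: "\<And>s. s \<in> space \<mu> \<Longrightarrow> 0 < \<alpha> s \<and> \<alpha> s \<le> 1"
    and alpha_int: "(\<integral>s. \<alpha> s \<partial>\<mu>) > 0"
    and strong: "\<And>s. s \<in> space \<mu> \<Longrightarrow> vf_strongly_monotone (A s) (\<alpha> s)"
    \<comment> \<open>(A2)\<close>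
    and phi_sel: "\<phi>star \<in> selections 2 \<mu> A xstar"
    and phi_int: "tbarycenter \<mu> xstar \<phi>star (tzero xstar)"
    \<comment> \<open>(A3)\<close>
    and A3: "\<And>n. AE \<omega> in P. real_cond_exp P (natural_filtration P \<mu> \<xi> n)
               (\<lambda>\<omega>. tinner xstar (\<phi>star (\<xi> (Suc n) \<omega>))
                        (tlog xstar (prox_iter A lam \<xi> x0 n \<omega>))) \<omega> = 0"
  shows "(\<integral>\<^sup>+ \<omega>. ennreal ((dist (prox_iter A lam \<xi> x0 n \<omega>) xstar)\<^sup>2) \<partial>P)
           \<le> (\<integral>\<^sup>+ \<omega>. ennreal ((dist (prox_iter A lam \<xi> x0 0 \<omega>) xstar)\<^sup>2) \<partial>P)
              + (\<integral>\<^sup>+ s. ennreal ((tnorm (\<phi>star s))\<^sup>2) \<partial>\<mu>) * (\<Sum>k. ennreal ((lam k)\<^sup>2))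
       \<and> (\<integral>\<^sup>+ \<omega>. ennreal ((dist (prox_iter A lam \<xi> x0 0 \<omega>) xstar)\<^sup>2) \<partial>P)
              + (\<integral>\<^sup>+ s. ennreal ((tnorm (\<phi>star s))\<^sup>2) \<partial>\<mu>) * (\<Sum>k. ennreal ((lam k)\<^sup>2)) < \<infinity>"
proof -
  interpret P: prob_space P by (rule probO)
  interpret E: prob_space \<mu> by (rule probE)
  have H: "hadamard_space TYPE('a)" by (rule hadamard)
  define X where "X n \<omega> = prox_iter A lam \<xi> x0 n \<omega>" for n \<omega>
  define N where "N s = (fst (\<phi>star s))\<^sup>2" for s
  define Hf where "Hf s c = tinner xstar (\<phi>star s) (tlog xstar c)" for s c
  define D where "D n \<omega> = (dist (X n \<omega>) xstar)\<^sup>2" for n \<omega>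
  define Hn where "Hn n \<omega> = Hf (\<xi> (Suc n) \<omega>) (X n \<omega>)" for n \<omega>
  define Nn where "Nn n \<omega> = N (\<xi> (Suc n) \<omega>)" for n \<omega>
  have tanA: "\<And>y. A s y \<subseteq> tangent y" if "s \<in> space \<mu>" for s
    using rmvf that unfolding random_monotone_vf_def by blast
  have monoA: "vf_monotone (A s)" if "s \<in> space \<mu>" for s
    using rmvf that unfolding random_monotone_vf_def by blast
  have surjA: "surjectivity_cond (A s)" if "s \<in> space \<mu>" for s
    using rmvf that unfolding random_monotone_vf_def by blast
  have measJ: "(\<lambda>s. resolvent (A s) l y) \<in> borel_measurable \<mu>" if "l > 0" for l y
    using rmvf that unfolding random_monotone_vf_def by blast
  have phiT: "\<phi>star s \<in> tangent xstar" if "s \<in> space \<mu>" for s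
    using phi_sel that unfolding selections_def tLp_def by blast
  have phiA: "tmem xstar (\<phi>star s) (A s xstar)" if "s \<in> space \<mu>" for s
    using phi_sel that unfolding selections_def by blast
  have phiM: "(\<lambda>s. tdist xstar (\<phi>star s) v) \<in> borel_measurable \<mu>" if "v \<in> tangent xstar" for v
    using phi_sel that unfolding selections_def tLp_def tmeasurable_def by blast
  have phiI: "(\<integral>\<^sup>+ s. ennreal ((tdist xstar (\<phi>star s) (tzero xstar)) ^ 2) \<partial>\<mu>) < \<infinity>"
    using phi_sel unfolding selections_def tLp_def by blast
  have xis: "\<xi> (Suc n) \<omega> \<in> space \<mu>" if "\<omega> \<in> space P" for n \<omega>
    using measurable_space[OF xi_meas that] .
  have fstphi: "fst (\<phi>star s) = tdist xstar (\<phi>star s) (tzero xstar)" "fst (\<phi>star s) \<ge> 0" if "s \<in> space \<mu>" for s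
    using tangent_fst[OF phiT[OF that]] by (auto simp: tdist_tzero)

  have XS: "X (Suc n) = (\<lambda>\<omega>. resolvent (A (\<xi> (Suc n) \<omega>)) (lam n) (X n \<omega>))" for n
    by (simp add: X_def fun_eq_iff)
  have Xm: "X n \<in> borel_measurable P" for n
  proof (induction n)
    case 0
    show ?case by (simp add: X_def)
  next
    case (Suc n)
    have "(\<lambda>\<omega>. (\<lambda>s y. resolvent (A s) (lam n) y) (\<xi> (Suc n) \<omega>) (X n \<omega>)) \<in> borel_measurable P"
    proof (rule carath_meas[OF sep _ _ xi_meas Suc.IH])
      show "\<And>y. (\<lambda>s. resolvent (A s) (lam n) y) \<in> borel_measurable \<mu>" using measJ lam_pos by blast
      show "\<And>s y y0. s \<in> space \<mu> \<Longrightarrow> y \<longlonglongrightarrow> y0 \<Longrightarrow>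
            (\<lambda>k. resolvent (A s) (lam n) (y k)) \<longlonglongrightarrow> resolvent (A s) (lam n) y0"
        by (rule resolvent_cont[OF H tanA monoA surjA lam_pos])
    qed
    then show ?case unfolding XS by simp
  qed
  have Nm: "N \<in> borel_measurable \<mu>"
  proof -
    have "(\<lambda>s. (tdist xstar (\<phi>star s) (tzero xstar))\<^sup>2) \<in> borel_measurable \<mu>"
      using phiM[OF tzero_tangent] by measurable
    then show ?thesis by (rule measurable_cong[THEN iffD1, rotated]) (simp add: N_def fstphi)
  qed
  have Hm: "(\<lambda>s. Hf s c) \<in> borel_measurable \<mu>" for c
  proof -
    have m1: "(\<lambda>s. tdist xstar (\<phi>star s) (tzero xstar)) \<in> borel_measurable \<mu>" by (rule phiM[OF tzero_tangent])
    have m2: "(\<lambda>s. tdist xstar (\<phi>star s) (tlog xstar c)) \<in> borel_measurable \<mu>" by (rule phiM[OF tlog_tangent[OF H]])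
    have meas: "(\<lambda>s. ((tdist xstar (\<phi>star s) (tzero xstar))\<^sup>2 + (dist xstar c)\<^sup>2 - (tdist xstar (\<phi>star s) (tlog xstar c))\<^sup>2) / 2)
          \<in> borel_measurable \<mu>" using m1 m2 by measurable
    have eq: "Hf s c = ((tdist xstar (\<phi>star s) (tzero xstar))\<^sup>2 + (dist xstar c)\<^sup>2 - (tdist xstar (\<phi>star s) (tlog xstar c))\<^sup>2) / 2"
      if "s \<in> space \<mu>" for s
      unfolding Hf_def using tinner_via_tdist[OF fstphi(2)[OF that], of "tlog xstar c" xstar] fstphi[OF that]
      by (simp add: fst_tlog)
    show ?thesis by (rule measurable_cong[THEN iffD2, OF eq meas])
  qed
  have Hc: "(\<lambda>k. Hf s (y k)) \<longlonglongrightarrow> Hf s y0" if s: "s \<in> space \<mu>" and y: "y \<longlonglongrightarrow> y0" for s y y0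
  proof -
    have d: "(\<lambda>k. dist (y k) y0) \<longlonglongrightarrow> 0" using y by (rule tendsto_dist_iff[THEN iffD1])
    have "(\<lambda>k. fst (\<phi>star s) * dist (y k) y0) \<longlonglongrightarrow> fst (\<phi>star s) * 0"
      by (intro tendsto_mult tendsto_const d)
    then have S: "(\<lambda>k. fst (\<phi>star s) * dist (y k) y0) \<longlonglongrightarrow> 0" by simp
    have "(\<lambda>k. dist (Hf s (y k)) (Hf s y0)) \<longlonglongrightarrow> 0"
    proof (rule tendsto_sandwich[OF _ _ tendsto_const S])
      show "\<forall>\<^sub>F k in sequentially. 0 \<le> dist (Hf s (y k)) (Hf s y0)" by simp
      show "\<forall>\<^sub>F k in sequentially. dist (Hf s (y k)) (Hf s y0) \<le> fst (\<phi>star s) * dist (y k) y0"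
        using tinner_lip[OF H phiT[OF s]] unfolding Hf_def dist_real_def
        by (intro always_eventually allI) blast
    qed
    then show ?thesis by (rule tendsto_dist_iff[THEN iffD2])
  qed
  have Hnm: "Hn n \<in> borel_measurable P" for n
  proof -
    have "(\<lambda>\<omega>. Hf (\<xi> (Suc n) \<omega>) (X n \<omega>)) \<in> borel_measurable P"
      by (rule carath_meas[OF sep Hm Hc xi_meas Xm])
    then show ?thesis unfolding Hn_def[abs_def] .
  qed
  have Nnm: "Nn n \<in> borel_measurable P" for n
    unfolding Nn_def[abs_def] by (rule measurable_compose[OF xi_meas Nm])
  have Dm: "D n \<in> borel_measurable P" for n
  proof -
    have "(\<lambda>\<omega>. (\<lambda>y. (dist y xstar)\<^sup>2) (X n \<omega>)) \<in> borel_measurable P"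
      by (rule borel_measurable_continuous_on[OF _ Xm]) (intro continuous_intros)
    then show ?thesis unfolding D_def[abs_def] by simp
  qed

  define K where "K = (\<integral>\<^sup>+ s. ennreal ((tnorm (\<phi>star s))\<^sup>2) \<partial>\<mu>)"
  have K_eq: "K = (\<integral>\<^sup>+ s. ennreal (N s) \<partial>\<mu>)" unfolding K_def N_def tnorm_def by simp
  have K_fin: "K < \<infinity>"
  proof -
    have "(\<integral>\<^sup>+ s. ennreal (N s) \<partial>\<mu>) = (\<integral>\<^sup>+ s. ennreal ((tdist xstar (\<phi>star s) (tzero xstar)) ^ 2) \<partial>\<mu>)"
      by (rule nn_integral_cong) (simp add: N_def fstphi)
    then show ?thesis using phiI K_eq by simp
  qed
  define Kr where "Kr = enn2real K"
  have Kr: "K = ennreal Kr" "Kr \<ge> 0" using K_fin by (auto simp: Kr_def ennreal_enn2real_if)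
  have Nn_nonneg: "0 \<le> Nn n \<omega>" for n \<omega> by (simp add: Nn_def N_def)
  have Kn: "(\<integral>\<^sup>+ \<omega>. ennreal (Nn n \<omega>) \<partial>P) = K" for n
  proof -
    have m: "(\<lambda>s. ennreal (N s)) \<in> borel_measurable (distr P \<mu> (\<xi> (Suc n)))"
      unfolding xi_distr using Nm by measurable
    have "(\<integral>\<^sup>+ s. ennreal (N s) \<partial>(distr P \<mu> (\<xi> (Suc n)))) = (\<integral>\<^sup>+ \<omega>. ennreal (N (\<xi> (Suc n) \<omega>)) \<partial>P)"
      by (rule nn_integral_distr[OF xi_meas m])
    then show ?thesis unfolding K_eq xi_distr Nn_def by simp
  qed
  have Nint: "integrable P (Nn n)" for n
    by (rule integrableI_nonneg[OF Nnm]) (use Kn K_fin Nn_nonneg in auto)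
  have NI: "(\<integral>\<omega>. Nn n \<omega> \<partial>P) = Kr" for n
  proof -
    have "ennreal (\<integral>\<omega>. Nn n \<omega> \<partial>P) = K"
      using nn_integral_eq_integral[OF Nint] Kn Nn_nonneg by simp
    then show ?thesis using Kr integral_nonneg_AE[of "Nn n" P] Nn_nonneg by simp
  qed

  have sub: "subalgebra P (natural_filtration P \<mu> \<xi> n)" for n
  proof -
    let ?G = "\<Union>i\<in>{1..n}. {\<xi> i -` B \<inter> space P | B. B \<in> sets \<mu>}"
    have G1: "?G \<subseteq> Pow (space P)" by auto
    have G2: "?G \<subseteq> sets P"
    proof
      fix S assume "S \<in> ?G"
      then obtain i B where iB: "i \<in> {1..n}" "B \<in> sets \<mu>" "S = \<xi> i -` B \<inter> space P" by blast
      then have "i = Suc (i - 1)" by auto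
      then have "\<xi> i \<in> measurable P \<mu>" using xi_meas[of "i - 1"] by simp
      then show "S \<in> sets P" using iB measurable_sets by blast
    qed
    show ?thesis unfolding subalgebra_def natural_filtration_def
      using sets_measure_of[OF G1] sets.sigma_sets_subset[OF G2] by (simp add: space_measure_of_conv)
  qed
  have Hzero: "(\<integral>\<omega>. Hn n \<omega> \<partial>P) = 0" if Hint: "integrable P (Hn n)" for n
  proof -
    have fms: "finite_measure_subalgebra P (natural_filtration P \<mu> \<xi> n)"
      unfolding finite_measure_subalgebra_def finite_measure_subalgebra_axioms_def
      using P.finite_measure_axioms sub by blast
    interpret S: finite_measure_subalgebra P "natural_filtration P \<mu> \<xi> n" by (rule fms)
    have HnE: "Hn n = (\<lambda>\<omega>. tinner xstar (\<phi>star (\<xi> (Suc n) \<omega>)) (tlog xstar (prox_iter A lam \<xi> x0 n \<omega>)))"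
      by (simp add: fun_eq_iff Hn_def Hf_def X_def)
    have "(\<integral>\<omega>. real_cond_exp P (natural_filtration P \<mu> \<xi> n) (Hn n) \<omega> \<partial>P) = (\<integral>\<omega>. Hn n \<omega> \<partial>P)"
      by (rule S.real_cond_exp_int(2)[OF Hint])
    moreover have "(\<integral>\<omega>. real_cond_exp P (natural_filtration P \<mu> \<xi> n) (Hn n) \<omega> \<partial>P) = 0"
      by (rule integral_eq_zero_AE) (use A3[of n] HnE in simp)
    ultimately show ?thesis by simp
  qed

  have D_nonneg: "0 \<le> D n \<omega>" for n \<omega> by (simp add: D_def)
  have pw: "D (Suc n) \<omega> \<le> D n \<omega> - 2 * lam n * Hn n \<omega> + (lam n)\<^sup>2 * Nn n \<omega>" if \<omega>: "\<omega> \<in> space P" for n \<omega>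
  proof -
    let ?s = "\<xi> (Suc n) \<omega>"
    have s: "?s \<in> space \<mu>" by (rule xis[OF \<omega>])
    have r: "is_resolvent (A ?s) (lam n) (X n \<omega>) (X (Suc n) \<omega>)"
      unfolding XS using resolvent_ok[OF H tanA[OF s] monoA[OF s] surjA[OF s] lam_pos] by simp
    show ?thesis unfolding D_def Hn_def Hf_def Nn_def N_def
      by (rule step_ineq[OF H tanA[OF s] monoA[OF s] lam_pos r phiT[OF s] phiA[OF s]])
  qed
  have Hbound: "\<bar>Hn n \<omega>\<bar> \<le> (Nn n \<omega> + D n \<omega>) / 2" if \<omega>: "\<omega> \<in> space P" for n \<omega>
  proof -
    let ?s = "\<xi> (Suc n) \<omega>"
    have s: "?s \<in> space \<mu>" by (rule xis[OF \<omega>])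
    let ?f = "fst (\<phi>star ?s)" and ?d = "dist xstar (X n \<omega>)"
    have "\<bar>Hn n \<omega>\<bar> \<le> ?f * ?d"
      unfolding Hn_def Hf_def using tinner_abs[OF fstphi(2)[OF s], of "tlog xstar (X n \<omega>)" xstar]
      by (simp add: fst_tlog)
    also have "\<dots> \<le> (?f\<^sup>2 + ?d\<^sup>2) / 2"
    proof -
      have "0 \<le> (?f - ?d)\<^sup>2" by simp
      then show ?thesis by (simp add: power2_diff algebra_simps)
    qed
    finally show ?thesis by (simp add: Nn_def N_def D_def dist_commute)
  qed
  have main: "integrable P (D n) \<and> (\<integral>\<omega>. D n \<omega> \<partial>P) \<le> (\<integral>\<omega>. D 0 \<omega> \<partial>P) + Kr * (\<Sum>k<n. (lam k)\<^sup>2)" for n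
  proof (induction n)
    case 0
    have "D 0 = (\<lambda>\<omega>. (dist x0 xstar)\<^sup>2)" by (simp add: D_def X_def fun_eq_iff)
    then show ?case by simp
  next
    case (Suc n)
    have Dint: "integrable P (D n)" using Suc.IH by blast
    have Hint: "integrable P (Hn n)"
    proof (rule Bochner_Integration.integrable_bound[OF _ Hnm])
      show "integrable P (\<lambda>\<omega>. (Nn n \<omega> + D n \<omega>) / 2)" using Nint Dint by simp
      show "AE \<omega> in P. norm (Hn n \<omega>) \<le> norm ((Nn n \<omega> + D n \<omega>) / 2)"
        using Hbound Nn_nonneg D_nonneg by (intro AE_I2) simp
    qed
    have Bint: "integrable P (\<lambda>\<omega>. D n \<omega> - 2 * lam n * Hn n \<omega> + (lam n)\<^sup>2 * Nn n \<omega>)"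
      using Dint Hint Nint by simp
    have DSint: "integrable P (D (Suc n))"
    proof (rule Bochner_Integration.integrable_bound[OF _ Dm])
      show "integrable P (\<lambda>\<omega>. D n \<omega> + 2 * lam n * \<bar>Hn n \<omega>\<bar> + (lam n)\<^sup>2 * Nn n \<omega>)"
        using Dint Hint Nint by simp
      show "AE \<omega> in P. norm (D (Suc n) \<omega>) \<le> norm (D n \<omega> + 2 * lam n * \<bar>Hn n \<omega>\<bar> + (lam n)\<^sup>2 * Nn n \<omega>)"
      proof (intro AE_I2)
        fix \<omega> assume \<omega>: "\<omega> \<in> space P"
        have "- (2 * lam n * Hn n \<omega>) \<le> 2 * lam n * \<bar>Hn n \<omega>\<bar>"
          using lam_pos[of n] by (simp add: abs_if)
        then have "D (Suc n) \<omega> \<le> D n \<omega> + 2 * lam n * \<bar>Hn n \<omega>\<bar> + (lam n)\<^sup>2 * Nn n \<omega>"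
          using pw[OF \<omega>, of n] by linarith
        moreover have "0 \<le> D n \<omega> + 2 * lam n * \<bar>Hn n \<omega>\<bar> + (lam n)\<^sup>2 * Nn n \<omega>"
          using D_nonneg Nn_nonneg lam_pos[of n] by simp
        ultimately show "norm (D (Suc n) \<omega>) \<le> norm (D n \<omega> + 2 * lam n * \<bar>Hn n \<omega>\<bar> + (lam n)\<^sup>2 * Nn n \<omega>)"
          using D_nonneg by simp
      qed
    qed
    have "(\<integral>\<omega>. D (Suc n) \<omega> \<partial>P) \<le> (\<integral>\<omega>. D n \<omega> - 2 * lam n * Hn n \<omega> + (lam n)\<^sup>2 * Nn n \<omega> \<partial>P)"
      by (rule integral_mono[OF DSint Bint pw])
    also have "\<dots> = (\<integral>\<omega>. D n \<omega> \<partial>P) - 2 * lam n * (\<integral>\<omega>. Hn n \<omega> \<partial>P) + (lam n)\<^sup>2 * (\<integral>\<omega>. Nn n \<omega> \<partial>P)"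
      using Dint Hint Nint by simp
    also have "\<dots> = (\<integral>\<omega>. D n \<omega> \<partial>P) + (lam n)\<^sup>2 * Kr" using Hzero[OF Hint] NI by simp
    also have "\<dots> \<le> (\<integral>\<omega>. D 0 \<omega> \<partial>P) + Kr * (\<Sum>k<n. (lam k)\<^sup>2) + (lam n)\<^sup>2 * Kr" using Suc.IH by simp
    also have "\<dots> = (\<integral>\<omega>. D 0 \<omega> \<partial>P) + Kr * (\<Sum>k<Suc n. (lam k)\<^sup>2)" by (simp add: algebra_simps)
    finally show ?case using DSint by simp
  qed

  define S where "S = (\<Sum>k. (lam k)\<^sup>2)"
  have S0: "S \<ge> 0" unfolding S_def by (rule suminf_nonneg[OF lam_sq]) simp
  have Ssum: "(\<Sum>k. ennreal ((lam k)\<^sup>2)) = ennreal S"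
    unfolding S_def by (rule suminf_ennreal_eq) (auto intro: summable_sums[OF lam_sq])
  have psum: "(\<Sum>k<n. (lam k)\<^sup>2) \<le> S" unfolding S_def by (rule sum_le_suminf[OF lam_sq]) auto
  have I0: "(\<integral>\<omega>. D 0 \<omega> \<partial>P) \<ge> 0" by (rule integral_nonneg_AE) (simp add: D_nonneg)
  have nnD: "(\<integral>\<^sup>+ \<omega>. ennreal (D m \<omega>) \<partial>P) = ennreal (\<integral>\<omega>. D m \<omega> \<partial>P)" for m
    using main[of m] D_nonneg by (intro nn_integral_eq_integral) auto
  have rhs: "(\<integral>\<^sup>+ \<omega>. ennreal (D 0 \<omega>) \<partial>P) + K * (\<Sum>k. ennreal ((lam k)\<^sup>2))
             = ennreal ((\<integral>\<omega>. D 0 \<omega> \<partial>P) + Kr * S)"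
    unfolding nnD Kr Ssum using I0 Kr(2) S0 by (simp add: ennreal_mult)
  have "(\<integral>\<omega>. D n \<omega> \<partial>P) \<le> (\<integral>\<omega>. D 0 \<omega> \<partial>P) + Kr * S"
    using main[of n] mult_left_mono[OF psum Kr(2)] by linarith
  then have c1: "(\<integral>\<^sup>+ \<omega>. ennreal (D n \<omega>) \<partial>P)
      \<le> (\<integral>\<^sup>+ \<omega>. ennreal (D 0 \<omega>) \<partial>P) + K * (\<Sum>k. ennreal ((lam k)\<^sup>2))"
    by (subst nnD[of n], subst rhs) (rule ennreal_leI)
  have c2: "(\<integral>\<^sup>+ \<omega>. ennreal (D 0 \<omega>) \<partial>P) + K * (\<Sum>k. ennreal ((lam k)\<^sup>2)) < \<infinity>"
    unfolding rhs by simp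
  show ?thesis using c1 c2 unfolding D_def X_def K_def by simp
qed

end
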